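(* Let $q$ be a complex number with $|q|<1$. Then \[ \sum_{i,j\geq0}\frac{q^{i^2-ij+j^2}}{(q;q)_i(q;q)_j}=\frac{(-q,-q,q^2;q^2)_\infty}{(q;q)_\infty}, \] \[ \sum_{i,j,k\geq0}\frac{q^{i^2+j^2+k^2+ik+jk}}{(q;q)_i(q;q)_j(q;q)_k}=\frac{(-q,-q,q^2;q^2)_\infty}{(q;q)_\infty}, \] and for every integer $\ell\geq4$, \[ \sum_{n_1,n_2,\dots,n_\ell\geq0}\frac{q^{Q(n_1,\dots,n_\ell)}}{(q;q)_{n_1}(q;q)_{n_2}\cdots(q;q)_{n_\ell}}=\frac{(-q,-q,q^2;q^2)_\infty}{(q;q)_\infty}, \] where, writing $A=n_1+n_3+n_4+\cdots+n_\ell$ and $B=n_2+n_3+n_4+\cdots+n_\ell$, \[ Q(n_1,\dots,n_\ell)=A^2-AB+B^2+\sum_{i=4}^{\ell}(n_1+n_i+n_{i+1}+\cdots+n_\ell)(n_2+n_i+n_{i+1}+\cdots+n_\ell)+n_1n_2 . \]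
   Context: The $q$-shifted factorials are defined by $(a;q)_0=1$, $(a;q)_n=\prod_{k=0}^{n-1}(1-aq^k)$ for $n\geq 1$, and $(a;q)_\infty=\prod_{k=0}^{\infty}(1-aq^k)$. Products are abbreviated as $(a_1,\dots,a_m;q)_\infty=(a_1;q)_\infty\cdots(a_m;q)_\infty$. *)

theory Defs
  imports "HOL-Analysis.Analysis"
begin

definition qpoch :: "complex \<Rightarrow> complex \<Rightarrow> nat \<Rightarrow> complex" where
  "qpoch a q n = (\<Prod>k<n. 1 - a * q ^ k)"

definition qpoch_inf :: "complex \<Rightarrow> complex \<Rightarrow> complex" where
  "qpoch_inf a q = (\<Prod>k. 1 - a * q ^ k)"

definition Qform :: "nat \<Rightarrow> (nat \<Rightarrow> nat) \<Rightarrow> int" where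
  "Qform l n = (let A = int (n 1) + (\<Sum>i=3..l. int (n i));
                    B = int (n 2) + (\<Sum>i=3..l. int (n i))
                in A^2 - A*B + B^2
                   + (\<Sum>i=4..l. (int (n 1) + (\<Sum>j=i..l. int (n j))) *
                                 (int (n 2) + (\<Sum>j=i..l. int (n j))))
                   + int (n 1) * int (n 2))"

end

theory Submission
  imports Defs
begin

lemma qpoch_0[simp]: "qpoch a q 0 = 1" by (simp add: qpoch_def)
lemma qpoch_Suc: "qpoch a q (Suc n) = qpoch a q n * (1 - a * q ^ n)"
  by (simp add: qpoch_def)

lemma qpoch_nonzero:
  fixes q :: complex assumes "norm q < 1" shows "qpoch q q n \<noteq> 0"
proof -
  have "1 - q * q ^ k \<noteq> 0" for k
  proof
    assume "1 - q * q ^ k = 0"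
    hence "q ^ Suc k = 1" by simp
    hence "norm q ^ Suc k = 1" by (metis norm_one norm_power)
    moreover have "norm q ^ Suc k < 1" using assms power_less_one_iff[of "norm q" "Suc k"]
      by (simp del: power_Suc)
    ultimately show False by simp
  qed
  thus ?thesis by (simp add: qpoch_def)
qed

lemma exp_lower_1m:
  fixes x :: real assumes "0 \<le> x" "x < 1" shows "exp (- (x / (1 - x))) \<le> 1 - x"
proof -
  have "1 + x / (1 - x) \<le> exp (x / (1 - x))" by (rule exp_ge_add_one_self)
  moreover have "1 + x / (1 - x) = 1 / (1 - x)" using assms by (simp add: field_simps)
  ultimately have "1 / (1 - x) \<le> exp (x / (1 - x))" by simp
  hence "inverse (exp (x / (1 - x))) \<le> 1 - x" using assms
    by (simp add: field_simps)
  thus ?thesis by (simp add: exp_minus)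
qed

lemma geom_partial_le:
  fixes r :: real assumes "0 \<le> r" "r < 1" shows "(\<Sum>k<n. r ^ k) \<le> 1 / (1 - r)"
proof -
  have "(\<Sum>k<n. r ^ k) = (1 - r ^ n) / (1 - r)" using assms by (simp add: sum_gp_strict)
  also have "\<dots> \<le> 1 / (1 - r)" using assms by (simp add: divide_right_mono)
  finally show ?thesis .
qed

lemma qpoch_upper:
  fixes q :: complex assumes "norm q < 1"
  shows "norm (qpoch q q n) \<le> exp (1 / (1 - norm q))"
proof -
  let ?r = "norm q"
  have "norm (qpoch q q n) = (\<Prod>k<n. norm (1 - q * q ^ k))"
    by (simp add: qpoch_def prod_norm)
  also have "\<dots> \<le> (\<Prod>k<n. exp (?r ^ k))"
  proof (rule prod_mono, safe)
    fix k
    have "norm (1 - q * q ^ k) \<le> 1 + norm (q * q ^ k)" by (rule norm_triangle_ineq4[THEN order.trans]) simp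
    also have "norm (q * q ^ k) = ?r ^ Suc k" by (simp add: norm_mult norm_power)
    also have "?r ^ Suc k \<le> ?r ^ k" using assms by (simp add: mult_left_le_one_le)
    finally have "norm (1 - q * q ^ k) \<le> 1 + ?r ^ k" by simp
    also have "\<dots> \<le> exp (?r ^ k)" by (rule exp_ge_add_one_self)
    finally show "norm (1 - q * q ^ k) \<le> exp (?r ^ k)" .
  qed simp
  also have "\<dots> = exp (\<Sum>k<n. ?r ^ k)" by (simp add: exp_sum)
  also have "\<dots> \<le> exp (1 / (1 - ?r))" using geom_partial_le[of ?r n] assms by simp
  finally show ?thesis .
qed

lemma qpoch_lower:
  fixes q :: complex assumes "norm q < 1"
  shows "exp (- (1 / (1 - norm q) ^ 2)) \<le> norm (qpoch q q n)"
proof -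
  let ?r = "norm q"
  have r0: "0 \<le> ?r" by simp
  have "(\<Sum>k<n. ?r ^ k) / (1 - ?r) \<le> (1 / (1 - ?r)) / (1 - ?r)"
    using geom_partial_le[of ?r n] assms by (intro divide_right_mono) auto
  hence "exp (- (1 / (1 - ?r) ^ 2)) \<le> exp (- ((\<Sum>k<n. ?r ^ k) / (1 - ?r)))"
    by (simp add: power2_eq_square)
  also have "\<dots> = (\<Prod>k<n. exp (- (?r ^ k / (1 - ?r))))"
    by (simp add: exp_sum[symmetric] sum_divide_distrib sum_negf)
  also have "\<dots> \<le> (\<Prod>k<n. norm (1 - q * q ^ k))"
  proof (rule prod_mono, safe)
    fix k
    have rk: "?r ^ Suc k < 1" using assms power_less_one_iff[of "?r" "Suc k"]
      by (simp del: power_Suc)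
    have "?r ^ Suc k \<le> ?r ^ k" using assms by (simp add: mult_left_le_one_le)
    moreover have "1 - ?r \<le> 1 - ?r ^ Suc k" using assms
      by (simp add: power_le_one mult_left_le)
    moreover have "0 < 1 - ?r" using assms by simp
    ultimately have "?r ^ Suc k / (1 - ?r ^ Suc k) \<le> ?r ^ k / (1 - ?r)"
      by (intro frac_le) auto
    hence "exp (- (?r ^ k / (1 - ?r))) \<le> exp (- (?r ^ Suc k / (1 - ?r ^ Suc k)))" by simp
    also have "\<dots> \<le> 1 - ?r ^ Suc k" by (rule exp_lower_1m) (use rk in auto)
    also have "1 - ?r ^ Suc k \<le> norm (1 - q * q ^ k)"
      using norm_triangle_ineq2[of 1 "q * q ^ k"] by (simp add: norm_mult norm_power)
    finally show "exp (- (?r ^ k / (1 - ?r))) \<le> norm (1 - q * q ^ k)" .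
  qed simp
  also have "\<dots> = norm (qpoch q q n)" by (simp add: qpoch_def prod_norm)
  finally show ?thesis .
qed

lemma qpoch_LIMSEQ:
  fixes q a :: complex assumes "norm q < 1"
  shows "(\<lambda>n. qpoch a q n) \<longlonglongrightarrow> qpoch_inf a q"
proof -
  have "summable (\<lambda>i. norm ((1 - a * q ^ i) - 1))"
    using assms by (simp add: norm_mult norm_power summable_geometric)
  hence "abs_convergent_prod (\<lambda>i. 1 - a * q ^ i)"
    by (rule summable_imp_abs_convergent_prod)
  hence cp: "convergent_prod (\<lambda>i. 1 - a * q ^ i)"
    by (rule abs_convergent_prod_imp_convergent_prod)
  have "(\<lambda>n. \<Prod>i\<le>n. 1 - a * q ^ i) \<longlonglongrightarrow> qpoch_inf a q"
    unfolding qpoch_inf_def by (rule convergent_prod_LIMSEQ[OF cp])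
  hence "(\<lambda>n. qpoch a q (Suc n)) \<longlonglongrightarrow> qpoch_inf a q"
    by (simp add: qpoch_def lessThan_Suc_atMost)
  thus ?thesis by (rule LIMSEQ_imp_Suc)
qed

lemma qpoch_inf_nonzero:
  fixes q :: complex assumes "norm q < 1"
  shows "qpoch_inf q q \<noteq> 0"
proof -
  have "summable (\<lambda>i. norm ((1 - q * q ^ i) - 1))"
    using assms by (simp add: norm_mult norm_power summable_geometric)
  hence "abs_convergent_prod (\<lambda>i. 1 - q * q ^ i)"
    by (rule summable_imp_abs_convergent_prod)
  hence cp: "convergent_prod (\<lambda>i. 1 - q * q ^ i)"
    by (rule abs_convergent_prod_imp_convergent_prod)
  have "1 - q * q ^ i \<noteq> 0" for i
    using qpoch_nonzero[OF assms, of "Suc i"] by (simp add: qpoch_Suc)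
  thus ?thesis unfolding qpoch_inf_def by (intro prodinf_nonzero cp)
qed

lemma alg1:
  fixes a b W X Y Z :: complex
  assumes n1: "1 - a \<noteq> 0" and n2: "1 - b \<noteq> 0" and "X \<noteq> 0" "Y \<noteq> 0" "Z \<noteq> 0"
  shows "(1 - a * b) * (W / (X * (1 - a) * (Y * (1 - b)) * Z))
         = W / (X * (Y * (1 - b)) * Z) + W * a / (X * (1 - a) * Y * Z)"
proof -
  have "(1 - a * b) / ((1 - a) * (1 - b)) = 1 / (1 - b) + a / (1 - a)"
    using n1 n2 by (simp add: field_simps)
  hence "W / (X * Y * Z) * ((1 - a * b) / ((1 - a) * (1 - b))) = W / (X * Y * Z) * (1 / (1 - b) + a / (1 - a))"
    by simp
  thus ?thesis by (simp add: algebra_simps)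
qed

lemma key_term:
  fixes q :: complex
  assumes nz: "\<And>k. qpoch q q k \<noteq> 0" and b: "b \<le> Suc p"
  shows "(1 - q ^ Suc p) * (q ^ (b * (b + n)) / (qpoch q q (Suc p - b) * qpoch q q b * qpoch q q (b + n)))
       = (if b \<le> p then q ^ (b * (b + n)) / (qpoch q q (p - b) * qpoch q q b * qpoch q q (b + n)) else 0)
       + (if b \<ge> 1 then q ^ (n + p + 1) * (q ^ ((b - 1) * ((b - 1) + (n + 1))) /
             (qpoch q q (p - (b - 1)) * qpoch q q (b - 1) * qpoch q q ((b - 1) + (n + 1)))) else 0)"
proof (cases "b = 0")
  case True
  have P: "qpoch q q (Suc p) = qpoch q q p * (1 - q ^ Suc p)" by (simp add: qpoch_Suc)
  have n1: "1 - q ^ Suc p \<noteq> 0" using nz[of "Suc p"] P by auto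
  have "(1 - q ^ Suc p) * (1 / (qpoch q q p * (1 - q ^ Suc p) * qpoch q q n))
        = 1 / (qpoch q q p * qpoch q q n)"
    using n1 nz[of p] nz[of n] by (simp add: divide_simps)
  then show ?thesis using True P by simp
next
  case False
  then obtain c where c: "b = Suc c" by (cases b) auto
  show ?thesis
  proof (cases "b = Suc p")
    case True
    hence cp: "c = p" using c by simp
    have e1: "Suc p - b = 0" using True by simp
    have e2: "p - (b - 1) = 0" using True by simp
    have e3: "b - 1 + (n + 1) = b + n" using c by simp
    have e5: "b - 1 = p" using c cp by simp
    have ex: "q ^ (b * (b + n)) = q ^ (n + p + 1) * q ^ ((b - 1) * ((b - 1) + (n + 1)))"
    proof -
      have "b * (b + n) = (n + p + 1) + (b - 1) * ((b - 1) + (n + 1))" using c cp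
        by (simp add: algebra_simps)
      thus ?thesis by (simp add: power_add)
    qed
    have Pb: "qpoch q q b = qpoch q q p * (1 - q ^ Suc p)" using c cp by (simp add: qpoch_Suc)
    define Q where "Q = q ^ Suc p"
    define W where "W = q ^ (b * (b + n))"
    define Z where "Z = qpoch q q (b + n)"
    define Pp where "Pp = qpoch q q p"
    define V where "V = q ^ ((b - 1) * ((b - 1) + (n + 1)))"
    define N where "N = q ^ (n + p + 1)"
    have n1: "1 - Q \<noteq> 0" using nz[of b] Pb unfolding Q_def by auto
    have "Pp \<noteq> 0" "Z \<noteq> 0" using nz unfolding Pp_def Z_def by auto
    have WNV: "W = N * V" unfolding W_def N_def V_def by (rule ex)
    have Pb': "qpoch q q b = Pp * (1 - Q)" unfolding Pp_def Q_def by (rule Pb)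
    show ?thesis
      unfolding Q_def[symmetric] W_def[symmetric] V_def[symmetric] N_def[symmetric]
      unfolding e1 e2 e3 unfolding e5 Z_def[symmetric] Pp_def[symmetric] Pb'
      using True n1 \<open>Pp \<noteq> 0\<close> \<open>Z \<noteq> 0\<close> WNV by (simp add: divide_simps)
  next
    case False
    with b have bp: "b \<le> p" by simp
    obtain d where d: "p = b + d" using bp by (metis le_add_diff_inverse)
    have e1: "Suc p - b = Suc d" using d by simp
    have e2: "p - b = d" using d by simp
    have e3: "p - (b - 1) = Suc d" using d c by simp
    have e4: "b - 1 + (n + 1) = b + n" using c by simp
    have e5: "b - 1 = c" using c by simp
    have ex: "q ^ (b * (b + n)) * q ^ Suc d = q ^ (n + p + 1) * q ^ ((b - 1) * ((b - 1) + (n + 1)))"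
    proof -
      have "b * (b + n) + Suc d = (n + p + 1) + (b - 1) * ((b - 1) + (n + 1))" using c d
        by (simp add: algebra_simps)
      thus ?thesis by (metis power_add)
    qed
    have Pd: "qpoch q q (Suc d) = qpoch q q d * (1 - q ^ Suc d)" by (simp add: qpoch_Suc)
    have Pb: "qpoch q q b = qpoch q q c * (1 - q ^ Suc c)" using c by (simp add: qpoch_Suc)
    have qp: "q ^ Suc p = q ^ Suc d * q ^ Suc c"
    proof -
      have "Suc p = Suc d + Suc c" using c d by simp
      thus ?thesis by (metis power_add)
    qed
    define \<alpha> where "\<alpha> = q ^ Suc d"
    define \<beta> where "\<beta> = q ^ Suc c"
    define W where "W = q ^ (b * (b + n))"
    define Z where "Z = qpoch q q (b + n)"
    define X where "X = qpoch q q d"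
    define Y where "Y = qpoch q q c"
    define V where "V = q ^ ((b - 1) * ((b - 1) + (n + 1)))"
    define N where "N = q ^ (n + p + 1)"
    have n1: "1 - \<alpha> \<noteq> 0" using nz[of "Suc d"] Pd unfolding \<alpha>_def by auto
    have n2: "1 - \<beta> \<noteq> 0" using nz[of b] Pb unfolding \<beta>_def by auto
    have "X \<noteq> 0" "Y \<noteq> 0" "Z \<noteq> 0" using nz unfolding X_def Y_def Z_def by auto
    have ex': "N * V = W * \<alpha>" unfolding N_def V_def W_def \<alpha>_def by (rule ex[symmetric])
    have alg: "(1 - \<alpha> * \<beta>) * (W / (X * (1 - \<alpha>) * (Y * (1 - \<beta>)) * Z))
         = W / (X * (Y * (1 - \<beta>)) * Z) + W * \<alpha> / (X * (1 - \<alpha>) * Y * Z)"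
      by (rule alg1) (use n1 n2 \<open>X \<noteq> 0\<close> \<open>Y \<noteq> 0\<close> \<open>Z \<noteq> 0\<close> in auto)
    have Pd': "qpoch q q (Suc d) = X * (1 - \<alpha>)" unfolding X_def \<alpha>_def by (rule Pd)
    have Pb': "qpoch q q b = Y * (1 - \<beta>)" unfolding Y_def \<beta>_def by (rule Pb)
    show ?thesis
      unfolding qp \<alpha>_def[symmetric] \<beta>_def[symmetric] W_def[symmetric] V_def[symmetric] N_def[symmetric]
      unfolding e1 e2 e3 e4 unfolding e5 Z_def[symmetric] X_def[symmetric] Y_def[symmetric] Pd' Pb'
      using bp c alg ex' by (simp add: mult.assoc)
  qed
qed

lemma key_lemma:
  fixes q :: complex
  assumes nz: "\<And>k. qpoch q q k \<noteq> 0"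
  shows "(\<Sum>b\<le>p. q ^ (b * (b + n)) / (qpoch q q (p - b) * qpoch q q b * qpoch q q (b + n)))
         = 1 / (qpoch q q p * qpoch q q (p + n))"
proof (induction p arbitrary: n)
  case 0
  then show ?case by simp
next
  case (Suc p)
  define t where "t p n b = q ^ (b * (b + n)) / (qpoch q q (p - b) * qpoch q q b * qpoch q q (b + n))" for p n b
  have IH: "(\<Sum>b\<le>p. t p n b) = 1 / (qpoch q q p * qpoch q q (p + n))" for n
    using Suc unfolding t_def by simp
  have "(1 - q ^ Suc p) * (\<Sum>b\<le>Suc p. t (Suc p) n b)
        = (\<Sum>b\<le>Suc p. (if b \<le> p then t p n b else 0) + (if b \<ge> 1 then q ^ (n + p + 1) * t p (n + 1) (b - 1) else 0))"
    unfolding sum_distrib_left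
    by (intro sum.cong refl, unfold t_def, rule key_term[OF nz]) simp
  also have "\<dots> = (\<Sum>b\<le>Suc p. (if b \<le> p then t p n b else 0)) + (\<Sum>b\<le>Suc p. (if b \<ge> 1 then q ^ (n + p + 1) * t p (n + 1) (b - 1) else 0))"
    by (rule sum.distrib)
  also have "(\<Sum>b\<le>Suc p. (if b \<le> p then t p n b else 0)) = (\<Sum>b\<le>p. t p n b)"
    by (simp add: sum.atMost_Suc)
  also have "(\<Sum>b\<le>Suc p. (if b \<ge> 1 then q ^ (n + p + 1) * t p (n + 1) (b - 1) else 0))
      = q ^ (n + p + 1) * (\<Sum>b\<le>p. t p (n + 1) b)"
    by (simp only: sum.atMost_Suc_shift) (simp add: sum_distrib_left)
  finally have eq: "(1 - q ^ Suc p) * (\<Sum>b\<le>Suc p. t (Suc p) n b)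
      = 1 / (qpoch q q p * qpoch q q (p + n)) + q ^ (n + p + 1) / (qpoch q q p * qpoch q q (p + (n + 1)))"
    unfolding IH by simp
  have P1: "qpoch q q (p + (n + 1)) = qpoch q q (p + n) * (1 - q ^ (n + p + 1))"
    using qpoch_Suc[of q q "p + n"] by (simp add: add.commute)
  have P2: "qpoch q q (Suc p) = qpoch q q p * (1 - q ^ Suc p)" by (simp add: qpoch_Suc)
  have n1: "1 - q ^ Suc p \<noteq> 0" using nz[of "Suc p"] P2 by auto
  have n2: "1 - q ^ (n + p + 1) \<noteq> 0" using nz[of "p + (n + 1)"] P1 by auto
  define A where "A = qpoch q q p"
  define B where "B = qpoch q q (p + n)"
  define \<alpha> where "\<alpha> = q ^ Suc p"
  define \<gamma> where "\<gamma> = q ^ (n + p + 1)"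
  have "A \<noteq> 0" "B \<noteq> 0" using nz unfolding A_def B_def by auto
  have "(1 - \<alpha>) * (\<Sum>b\<le>Suc p. t (Suc p) n b) = 1 / (A * B) + \<gamma> / (A * (B * (1 - \<gamma>)))"
    using eq unfolding P1 A_def[symmetric] B_def[symmetric] \<alpha>_def[symmetric] \<gamma>_def[symmetric] .
  also have "1 / (A * B) + \<gamma> / (A * (B * (1 - \<gamma>))) = 1 / (A * (B * (1 - \<gamma>)))"
    using \<open>A \<noteq> 0\<close> \<open>B \<noteq> 0\<close> n2 unfolding \<gamma>_def[symmetric] by (simp add: field_simps)
  finally have "(1 - \<alpha>) * (\<Sum>b\<le>Suc p. t (Suc p) n b) = 1 / (A * (B * (1 - \<gamma>)))" .
  hence "(\<Sum>b\<le>Suc p. t (Suc p) n b) = 1 / (A * (B * (1 - \<gamma>))) / (1 - \<alpha>)"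
    using n1 unfolding \<alpha>_def[symmetric] by (metis nonzero_mult_div_cancel_left)
  hence "(\<Sum>b\<le>Suc p. t (Suc p) n b) = 1 / ((A * (1 - \<alpha>)) * (B * (1 - \<gamma>)))"
    by (simp add: mult_ac)
  moreover have "A * (1 - \<alpha>) = qpoch q q (Suc p)" unfolding A_def \<alpha>_def P2 ..
  moreover have "B * (1 - \<gamma>) = qpoch q q (Suc p + n)" unfolding B_def \<gamma>_def using P1 by simp
  ultimately show ?case unfolding t_def by simp
qed

lemma key_sym_aux:
  fixes q :: complex
  assumes nz: "\<And>k. qpoch q q k \<noteq> 0" and ba: "b \<le> a"
  shows "(\<Sum>k\<le>b. q ^ ((a - k) * (b - k)) / (qpoch q q (a - k) * qpoch q q (b - k) * qpoch q q k))
         = 1 / (qpoch q q a * qpoch q q b)"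
proof -
  define n where "n = a - b"
  have an: "a = b + n" using ba n_def by simp
  have "(\<Sum>k\<le>b. q ^ ((a - k) * (b - k)) / (qpoch q q (a - k) * qpoch q q (b - k) * qpoch q q k))
      = (\<Sum>j\<le>b. q ^ (j * (j + n)) / (qpoch q q (b - j) * qpoch q q j * qpoch q q (j + n)))"
    by (rule sum.reindex_bij_witness[where i="\<lambda>j. b - j" and j="\<lambda>k. b - k"])
       (use an in \<open>auto simp: mult_ac\<close>)
  also have "\<dots> = 1 / (qpoch q q b * qpoch q q (b + n))" by (rule key_lemma[OF nz])
  finally show ?thesis using an by (simp add: mult_ac)
qed

lemma key_sym:
  fixes q :: complex
  assumes nz: "\<And>k. qpoch q q k \<noteq> 0"
  shows "(\<Sum>k\<le>min a b. q ^ ((a - k) * (b - k)) / (qpoch q q (a - k) * qpoch q q (b - k) * qpoch q q k))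
         = 1 / (qpoch q q a * qpoch q q b)"
proof (cases "b \<le> a")
  case True
  hence "min a b = b" by simp
  then show ?thesis using key_sym_aux[OF nz True] by simp
next
  case False
  hence "a \<le> b" by simp
  have m: "min a b = a" using False by simp
  from key_sym_aux[OF nz \<open>a \<le> b\<close>] show ?thesis unfolding m by (simp add: mult_ac)
qed

lemma pow_le_geom:
  fixes r :: real assumes "0 \<le> r" "r \<le> 1" "b \<le> m" shows "r ^ m \<le> r ^ b"
  using assms by (simp add: power_decreasing)

lemma durfee:
  fixes q :: complex assumes q: "norm q < 1"
  shows "(\<lambda>b. q ^ (b * (b + n)) / (qpoch q q b * qpoch q q (b + n))) sums (1 / qpoch_inf q q)"
    and "summable (\<lambda>b. norm (q ^ (b * (b + n)) / (qpoch q q b * qpoch q q (b + n))))"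
proof -
  let ?P = "qpoch q q"
  let ?Pi = "qpoch_inf q q"
  have nz: "\<And>k. ?P k \<noteq> 0" using qpoch_nonzero[OF q] .
  have Pinz: "?Pi \<noteq> 0" using qpoch_inf_nonzero[OF q] .
  have lim: "?P \<longlonglongrightarrow> ?Pi" using qpoch_LIMSEQ[OF q] .
  define r where "r = norm q"
  define U where "U = exp (1 / (1 - r))"
  define L where "L = exp (- (1 / (1 - r) ^ 2))"
  have r: "0 \<le> r" "r < 1" using q unfolding r_def by auto
  have Lpos: "L > 0" unfolding L_def by simp
  have up: "norm (?P k) \<le> U" for k unfolding U_def r_def by (rule qpoch_upper[OF q])
  have lo: "L \<le> norm (?P k)" for k unfolding L_def r_def by (rule qpoch_lower[OF q])
  define a where "a b p = (if b \<le> p then q ^ (b * (b + n)) * ?P p / (?P (p - b) * ?P b * ?P (b + n)) else 0)" for b p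
  define c where "c b = q ^ (b * (b + n)) / (?P b * ?P (b + n))" for b
  define M where "M b = r ^ b * (U / (L * L * L))" for b
  have limit: "(\<lambda>p. a b p) \<longlonglongrightarrow> c b" for b
  proof -
    have l1: "(\<lambda>p. ?P (p - b)) \<longlonglongrightarrow> ?Pi" by (rule seq_offset_neg[OF lim])
    have "(\<lambda>p. q ^ (b * (b + n)) * ?P p / (?P (p - b) * ?P b * ?P (b + n)))
          \<longlonglongrightarrow> q ^ (b * (b + n)) * ?Pi / (?Pi * ?P b * ?P (b + n))"
      by (rule tendsto_divide[OF tendsto_mult[OF tendsto_const lim]
            tendsto_mult[OF tendsto_mult[OF l1 tendsto_const] tendsto_const]])
         (use Pinz nz in simp)
    moreover have "eventually (\<lambda>p. q ^ (b * (b + n)) * ?P p / (?P (p - b) * ?P b * ?P (b + n)) = a b p) sequentially"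
      unfolding a_def eventually_sequentially by auto
    ultimately have "(\<lambda>p. a b p) \<longlonglongrightarrow> q ^ (b * (b + n)) * ?Pi / (?Pi * ?P b * ?P (b + n))"
      by (rule Lim_transform_eventually)
    moreover have "q ^ (b * (b + n)) * ?Pi / (?Pi * ?P b * ?P (b + n)) = c b"
      unfolding c_def using Pinz by simp
    ultimately show ?thesis by simp
  qed
  have bound: "norm (a b p) \<le> M b" for b p
  proof (cases "b \<le> p")
    case True
    have "norm (a b p) = norm q ^ (b * (b + n)) * norm (?P p) / (norm (?P (p - b)) * norm (?P b) * norm (?P (b + n)))"
      using True unfolding a_def by (simp add: norm_mult norm_divide norm_power)
    also have "\<dots> \<le> (r ^ b * U) / (L * L * L)"
    proof (rule frac_le)
      have "norm q ^ (b * (b + n)) \<le> r ^ b" unfolding r_def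
        by (rule power_decreasing) (use q in auto)
      thus "norm q ^ (b * (b + n)) * norm (?P p) \<le> r ^ b * U"
        by (rule mult_mono) (use up r in auto)
      show "0 \<le> r ^ b * U" using r unfolding U_def by simp
      show "0 < L * L * L" using Lpos by simp
      have "L * L \<le> norm (?P (p - b)) * norm (?P b)"
        by (rule mult_mono) (use lo Lpos in \<open>auto simp: less_imp_le\<close>)
      thus "L * L * L \<le> norm (?P (p - b)) * norm (?P b) * norm (?P (b + n))"
        by (rule mult_mono) (use lo Lpos in \<open>auto simp: less_imp_le\<close>)
    qed
    finally show ?thesis unfolding M_def by simp
  next
    case False
    have "0 \<le> U / (L * L * L)" using Lpos unfolding U_def by simp
    hence "0 \<le> r ^ b * (U / (L * L * L))" using r by (intro mult_nonneg_nonneg) auto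
    then show ?thesis unfolding a_def M_def using False by simp
  qed
  have sumM: "summable M" unfolding M_def
    by (intro summable_mult2 summable_geometric) (use r in auto)
  have T: "eventually (\<lambda>p. summable (\<lambda>k. norm (a k p))) sequentially \<and>
           summable (\<lambda>k. norm (c k)) \<and>
           ((\<lambda>p. suminf (\<lambda>k. a k p)) \<longlonglongrightarrow> suminf c)"
    by (rule tannerys_theorem[OF limit _ sumM]) (use bound in \<open>auto intro: always_eventually\<close>)
  have fin: "suminf (\<lambda>k. a k p) = 1 / ?P (p + n)" for p
  proof -
    have "suminf (\<lambda>k. a k p) = (\<Sum>k\<le>p. a k p)"
      by (rule suminf_finite) (auto simp: a_def)
    also have "\<dots> = ?P p * (\<Sum>k\<le>p. q ^ (k * (k + n)) / (?P (p - k) * ?P k * ?P (k + n)))"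
      unfolding a_def sum_distrib_left by (intro sum.cong) auto
    also have "\<dots> = ?P p * (1 / (?P p * ?P (p + n)))" by (simp only: key_lemma[OF nz])
    also have "\<dots> = 1 / ?P (p + n)" using nz[of p] by simp
    finally show ?thesis .
  qed
  have "(\<lambda>p. 1 / ?P (p + n)) \<longlonglongrightarrow> 1 / ?Pi"
    by (intro tendsto_divide tendsto_const LIMSEQ_ignore_initial_segment[OF lim] Pinz)
  moreover have "(\<lambda>p. 1 / ?P (p + n)) \<longlonglongrightarrow> suminf c" using T fin by simp
  ultimately have "suminf c = 1 / ?Pi" using LIMSEQ_unique by blast
  moreover have "summable c" using T summable_norm_cancel by blast
  ultimately show "(\<lambda>b. q ^ (b * (b + n)) / (qpoch q q b * qpoch q q (b + n))) sums (1 / qpoch_inf q q)"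
    unfolding c_def using summable_sums by fastforce
  show "summable (\<lambda>b. norm (q ^ (b * (b + n)) / (qpoch q q b * qpoch q q (b + n))))"
    using T unfolding c_def by simp
qed

lemma fiber_step:
  fixes f :: "'a \<Rightarrow> complex" and g :: "'b \<Rightarrow> complex" and M :: "'a \<Rightarrow> real" and G :: "'b \<Rightarrow> real"
  assumes hA: "\<And>x. x \<in> A \<Longrightarrow> h x \<in> B"
  and fin: "\<And>y. y \<in> B \<Longrightarrow> finite {x\<in>A. h x = y}"
  and fsum: "\<And>y. y \<in> B \<Longrightarrow> (\<Sum>x\<in>{x\<in>A. h x = y}. f x) = g y"
  and Msum: "\<And>y. y \<in> B \<Longrightarrow> (\<Sum>x\<in>{x\<in>A. h x = y}. M x) = G y"
  and Gsum: "G summable_on B"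
  and fM: "\<And>x. x \<in> A \<Longrightarrow> norm (f x) \<le> M x"
  and gS: "(g has_sum S) B"
  shows "(f has_sum S) A"
proof -
  define Sg where "Sg = Sigma B (\<lambda>y. {x\<in>A. h x = y})"
  have bij: "bij_betw (\<lambda>x. (h x, x)) A Sg"
    unfolding Sg_def by (rule bij_betwI[where g=snd]) (auto simp: hA)
  have Mnn: "x \<in> A \<Longrightarrow> 0 \<le> M x" for x using fM[of x] norm_ge_zero[of "f x"] by linarith
  have "(\<lambda>(y, x). M x) summable_on Sg"
    unfolding Sg_def
  proof (rule summable_on_SigmaI[where g=G])
    fix y assume y: "y \<in> B"
    show "((\<lambda>x. case (y, x) of (y, x) \<Rightarrow> M x) has_sum G y) {x \<in> A. h x = y}"
      using fin[OF y] Msum[OF y] by (auto intro: has_sum_finiteI)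
  qed (use Gsum Mnn in auto)
  hence "M summable_on A"
    using summable_on_reindex_bij_betw[OF bij, of "\<lambda>(y, x). M x"] by simp
  hence "(\<lambda>x. norm (M x)) summable_on A"
    by (rule summable_on_cong[THEN iffD1, rotated]) (use Mnn in auto)
  hence "(\<lambda>x. norm (f x)) summable_on A"
    by (rule Infinite_Sum.abs_summable_on_comparison_test) (use fM Mnn in auto)
  hence fs: "f summable_on A" by (rule Infinite_Sum.abs_summable_summable)
  hence "(\<lambda>(y, x). f x) summable_on Sg"
    using summable_on_reindex_bij_betw[OF bij, of "\<lambda>(y, x). f x"] by simp
  hence "((\<lambda>(y, x). f x) has_sum S) Sg"
    unfolding Sg_def
  proof (intro has_sum_SigmaI[where g=g] gS)
    fix y assume y: "y \<in> B"
    show "((\<lambda>x. case (y, x) of (y, x) \<Rightarrow> f x) has_sum g y) {x \<in> A. h x = y}"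
      using fin[OF y] fsum[OF y] by (auto intro: has_sum_finiteI)
  qed
  thus ?thesis
    using has_sum_reindex_bij_betw[OF bij, of "\<lambda>(y, x). f x"] by simp
qed

definition qbin :: "complex \<Rightarrow> nat \<Rightarrow> nat \<Rightarrow> complex" where
  "qbin q m j = qpoch (q^2) (q^2) m / (qpoch (q^2) (q^2) j * qpoch (q^2) (q^2) (m - j))"

lemma qpoch2_Suc: "qpoch (q^2) (q^2) (Suc k) = qpoch (q^2) (q^2) k * (1 - q ^ (2 * Suc k))"
proof -
  have "q^2 * (q^2)^k = q ^ (2 * Suc k)" by (simp add: power_mult[symmetric] power_add[symmetric])
  thus ?thesis by (simp add: qpoch_Suc)
qed

lemma alg2:
  fixes a b X Y Z :: complex
  assumes n1: "1 - a \<noteq> 0" and n2: "1 - b \<noteq> 0" and "X \<noteq> 0" "Y \<noteq> 0" "Z \<noteq> 0"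
  shows "W * (1 - a * b) / (Y * (1 - b) * (Z * (1 - a))) = b * (W / (Y * (1 - b) * Z)) + W / (Y * (Z * (1 - a)))"
proof -
  have "(1 - a * b) / ((1 - b) * (1 - a)) = b / (1 - b) + 1 / (1 - a)"
    using n1 n2 by (simp add: field_simps)
  hence "W / (Y * Z) * ((1 - a * b) / ((1 - b) * (1 - a))) = W / (Y * Z) * (b / (1 - b) + 1 / (1 - a))"
    by simp
  thus ?thesis by (simp add: algebra_simps)
qed

lemma qbin_pascal:
  fixes q :: complex
  assumes nz: "\<And>k. qpoch (q^2) (q^2) k \<noteq> 0" and j: "1 \<le> j" "j \<le> m"
  shows "qbin q (Suc m) j = q ^ (2 * j) * qbin q m j + qbin q m (j - 1)"
proof -
  obtain c where c: "j = Suc c" using j by (cases j) auto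
  obtain d where d: "m = j + d" using j by (metis le_add_diff_inverse)
  define Pp where "Pp = qpoch (q^2) (q^2)"
  have e1: "Suc m - j = Suc d" "m - j = d" "m - (j - 1) = Suc d" using c d by auto
  have e2: "j - 1 = c" using c by auto
  have P1: "Pp (Suc m) = Pp m * (1 - q ^ (2 * Suc d) * q ^ (2 * j))"
  proof -
    have "2 * Suc m = 2 * Suc d + 2 * j" using d by simp
    thus ?thesis unfolding Pp_def qpoch2_Suc by (simp add: power_add)
  qed
  have P2: "Pp j = Pp c * (1 - q ^ (2 * j))" unfolding Pp_def c qpoch2_Suc ..
  have P3: "Pp (Suc d) = Pp d * (1 - q ^ (2 * Suc d))" unfolding Pp_def qpoch2_Suc ..
  define a where "a = q ^ (2 * Suc d)"
  define b where "b = q ^ (2 * j)"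
  have n1: "1 - a \<noteq> 0" using nz[of "Suc d"] P3 unfolding a_def Pp_def by auto
  have n2: "1 - b \<noteq> 0" using nz[of j] P2 unfolding b_def Pp_def by auto
  have "Pp m \<noteq> 0" "Pp c \<noteq> 0" "Pp d \<noteq> 0" using nz unfolding Pp_def by auto
  have "qbin q (Suc m) j = Pp m * (1 - a * b) / (Pp c * (1 - b) * (Pp d * (1 - a)))"
    unfolding qbin_def Pp_def[symmetric] e1 P1 P2 P3 a_def b_def ..
  also have "\<dots> = b * (Pp m / (Pp c * (1 - b) * Pp d)) + Pp m / (Pp c * (Pp d * (1 - a)))"
    by (rule alg2) (use n1 n2 \<open>Pp m \<noteq> 0\<close> \<open>Pp c \<noteq> 0\<close> \<open>Pp d \<noteq> 0\<close> in auto)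
  also have "\<dots> = q ^ (2 * j) * qbin q m j + qbin q m (j - 1)"
    unfolding qbin_def Pp_def[symmetric] e1 unfolding e2 P2 P3 a_def b_def ..
  finally show ?thesis .
qed

lemma qbin_0[simp]: "qbin q m 0 = 1 \<or> qpoch (q^2) (q^2) m = 0"
  by (simp add: qbin_def)

lemma qbin_0': "qpoch (q^2) (q^2) m \<noteq> 0 \<Longrightarrow> qbin q m 0 = 1"
  by (simp add: qbin_def)

lemma qbin_m': "qpoch (q^2) (q^2) m \<noteq> 0 \<Longrightarrow> qbin q m m = 1"
  by (simp add: qbin_def)

lemma rothe:
  fixes q :: complex
  assumes nz: "\<And>k. qpoch (q^2) (q^2) k \<noteq> 0"
  shows "(\<Prod>i<m. 1 + y * q ^ (2 * i)) = (\<Sum>j\<le>m. qbin q m j * q ^ (j * (j - 1)) * y ^ j)"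
proof (induction m arbitrary: y)
  case 0
  then show ?case using qbin_0'[of q 0] nz by simp
next
  case (Suc m)
  define c where "c j = qbin q m j * q ^ (j * (j - 1)) * q ^ (2 * j)" for j
  have "(\<Prod>i<Suc m. 1 + y * q ^ (2 * i)) = (1 + y) * (\<Prod>i<m. 1 + (y * q^2) * q ^ (2 * i))"
  proof -
    have "1 + y * q ^ (2 * Suc i) = 1 + (y * q^2) * q ^ (2 * i)" for i
    proof -
      have "2 * Suc i = 2 + 2 * i" by simp
      thus ?thesis by (metis power_add mult.assoc)
    qed
    thus ?thesis by (simp only: prod.lessThan_Suc_shift) simp
  qed
  also have "(\<Prod>i<m. 1 + (y * q^2) * q ^ (2 * i)) = (\<Sum>j\<le>m. c j * y ^ j)"
    unfolding Suc.IH c_def by (intro sum.cong refl) (simp add: power_mult_distrib power_mult[symmetric] mult_ac)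
  also have "(1 + y) * (\<Sum>j\<le>m. c j * y ^ j) = (\<Sum>j\<le>m. c j * y ^ j) + (\<Sum>j\<le>m. c j * y ^ Suc j)"
    by (simp add: algebra_simps sum_distrib_left sum.distrib)
  also have "\<dots> = (\<Sum>j\<le>Suc m. (if j \<le> m then c j * y ^ j else 0) + (if 1 \<le> j then c (j - 1) * y ^ j else 0))"
  proof -
    have "(\<Sum>j\<le>Suc m. (if j \<le> m then c j * y ^ j else 0)) = (\<Sum>j\<le>m. c j * y ^ j)"
      by (simp add: sum.atMost_Suc)
    moreover have "(\<Sum>j\<le>Suc m. (if 1 \<le> j then c (j - 1) * y ^ j else 0)) = (\<Sum>j\<le>m. c j * y ^ Suc j)"
      by (simp only: sum.atMost_Suc_shift) simp
    ultimately show ?thesis by (simp add: sum.distrib)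
  qed
  also have "\<dots> = (\<Sum>j\<le>Suc m. qbin q (Suc m) j * q ^ (j * (j - 1)) * y ^ j)"
  proof (intro sum.cong refl)
    fix j assume j: "j \<in> {..Suc m}"
    show "(if j \<le> m then c j * y ^ j else 0) + (if 1 \<le> j then c (j - 1) * y ^ j else 0)
          = qbin q (Suc m) j * q ^ (j * (j - 1)) * y ^ j"
    proof (cases "j = 0")
      case True
      then show ?thesis using qbin_0'[of q m] qbin_0'[of q "Suc m"] nz unfolding c_def by simp
    next
      case False
      then obtain i where i: "j = Suc i" by (cases j) auto
      have ex: "q ^ (i * (i - 1)) * q ^ (2 * i) = q ^ (j * (j - 1))"
      proof -
        have "i * (i - 1) + 2 * i = j * (j - 1)" using i by (cases i) (auto simp: algebra_simps)
        thus ?thesis by (metis power_add)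
      qed
      have cj1: "c (j - 1) = qbin q m (j - 1) * q ^ (j * (j - 1))"
        unfolding c_def using i ex by (simp add: mult.assoc)
      show ?thesis
      proof (cases "j = Suc m")
        case True
        have "qbin q m m = 1" "qbin q (Suc m) (Suc m) = 1" using qbin_m' nz by auto
        then show ?thesis using True cj1 by simp
      next
        case False
        hence jm: "j \<le> m" using j by simp
        have "qbin q (Suc m) j = q ^ (2 * j) * qbin q m j + qbin q m (j - 1)"
          by (rule qbin_pascal[OF nz]) (use jm i in auto)
        then show ?thesis using jm i cj1 unfolding c_def by (simp add: algebra_simps)
      qed
    qed
  qed
  finally show ?case .
qed

lemma rothe_homog:
  fixes q x :: complex
  assumes nz: "\<And>k. qpoch (q^2) (q^2) k \<noteq> 0" and x: "x \<noteq> 0"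
  shows "(\<Prod>i<m. x + q ^ (2 * i)) = (\<Sum>j\<le>m. qbin q m j * q ^ (j * (j - 1)) * x ^ (m - j))"
proof -
  have "(\<Prod>i<m. x + q ^ (2 * i)) = (\<Prod>i<m. x * (1 + (1 / x) * q ^ (2 * i)))"
    using x by (intro prod.cong refl) (simp add: field_simps)
  also have "\<dots> = x ^ m * (\<Prod>i<m. 1 + (1 / x) * q ^ (2 * i))"
    by (simp add: prod.distrib)
  also have "\<dots> = x ^ m * (\<Sum>j\<le>m. qbin q m j * q ^ (j * (j - 1)) * (1 / x) ^ j)"
    by (simp only: rothe[OF nz])
  also have "\<dots> = (\<Sum>j\<le>m. qbin q m j * q ^ (j * (j - 1)) * x ^ (m - j))"
    unfolding sum_distrib_left
  proof (intro sum.cong refl)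
    fix j assume "j \<in> {..m}"
    hence "x ^ (m - j) = x ^ m / x ^ j" using x by (simp add: power_diff)
    thus "x ^ m * (qbin q m j * q ^ (j * (j - 1)) * (1 / x) ^ j) = qbin q m j * q ^ (j * (j - 1)) * x ^ (m - j)"
      by (simp add: power_one_over field_simps)
  qed
  finally show ?thesis .
qed

lemma prod_lessThan_add_nat: fixes a b :: nat shows "(\<Prod>i<a + b. f i) = (\<Prod>i<a. f i) * (\<Prod>i<b. f (a + i))"
  by (induction b) (simp_all add: mult_ac)

lemma sum_double_lessThan: fixes n :: nat shows "(\<Sum>i<n. 2 * i) = n * (n - 1)"
proof (induction n)
  case (Suc n)
  thus ?case by (cases n) (simp_all add: algebra_simps)
qed simp

lemma expo:
  fixes n k j :: nat
  assumes n: "n \<ge> 1" and k: "k \<le> n" and j: "j = n - k \<or> j = n + k"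
  shows "j * (j - 1) + (2 * n - 1) * (2 * n - j) = n * (n - 1) + (2 * n - 1) * n + k ^ 2"
proof -
  have jle: "j \<le> 2 * n" using j k by auto
  have i1: "int (j * (j - 1)) = int j * (int j - 1)" by (cases j) (auto simp: algebra_simps)
  have i2: "int ((2 * n - 1) * (2 * n - j)) = (2 * int n - 1) * (2 * int n - int j)"
    using n jle by (simp add: of_nat_diff)
  have i3: "int (n * (n - 1)) = int n * (int n - 1)" by (cases n) (auto simp: algebra_simps)
  have i4: "int ((2 * n - 1) * n) = (2 * int n - 1) * int n" using n by (simp add: of_nat_diff)
  have ij: "int j = int n - int k \<or> int j = int n + int k" using j k by (auto simp: of_nat_diff)
  have "int j * (int j - 1) + (2 * int n - 1) * (2 * int n - int j)
        = int n * (int n - 1) + (2 * int n - 1) * int n + int k ^ 2"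
    using ij by (elim disjE) algebra+
  hence "int (j * (j - 1) + (2 * n - 1) * (2 * n - j)) = int (n * (n - 1) + (2 * n - 1) * n + k ^ 2)"
    by (simp only: of_nat_add i1 i2 i3 i4 of_nat_power)
  thus ?thesis by (simp only: of_nat_eq_iff)
qed

lemma qpoch_mq: "qpoch (-q) (q^2) n = (\<Prod>k<n. 1 + q ^ (2 * k + 1))"
  unfolding qpoch_def by (intro prod.cong refl) (simp add: power_mult[symmetric] power_add mult_ac)

lemma jtp_finite:
  fixes q :: complex
  assumes nz: "\<And>k. qpoch (q^2) (q^2) k \<noteq> 0" and q0: "q \<noteq> 0"
  shows "qpoch (-q) (q^2) n ^ 2 = 2 * (\<Sum>k\<le>n. q ^ (k^2) * qbin q (2 * n) (n - k)) - qbin q (2 * n) n"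
proof (cases "n = 0")
  case True
  then show ?thesis using qbin_0'[of q 0] nz by simp
next
  case False
  hence n: "n \<ge> 1" by simp
  define x where "x = q ^ (2 * n - 1)"
  define e0 where "e0 = n * (n - 1) + (2 * n - 1) * n"
  define R where "R = (\<Prod>k<n. 1 + q ^ (2 * k + 1))"
  have x0: "x \<noteq> 0" using q0 unfolding x_def by simp
  have LHS: "(\<Prod>i<2 * n. x + q ^ (2 * i)) = q ^ e0 * R ^ 2"
  proof -
    have "(\<Prod>i<2 * n. x + q ^ (2 * i)) = (\<Prod>i<n. x + q ^ (2 * i)) * (\<Prod>i<n. x + q ^ (2 * (n + i)))"
      using prod_lessThan_add_nat[of "\<lambda>i. x + q ^ (2 * i)" n n] by (simp add: mult_2)
    also have "(\<Prod>i<n. x + q ^ (2 * i)) = (\<Prod>i<n. q ^ (2 * i) * (1 + q ^ (2 * (n - 1 - i) + 1)))"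
    proof (intro prod.cong refl)
      fix i assume i: "i \<in> {..<n}"
      have "2 * n - 1 = 2 * i + (2 * (n - 1 - i) + 1)" using i by auto
      hence "x = q ^ (2 * i) * q ^ (2 * (n - 1 - i) + 1)" unfolding x_def by (metis power_add)
      thus "x + q ^ (2 * i) = q ^ (2 * i) * (1 + q ^ (2 * (n - 1 - i) + 1))" by (simp add: algebra_simps)
    qed
    also have "\<dots> = q ^ (n * (n - 1)) * R"
    proof -
      have "(\<Prod>i<n. q ^ (2 * i)) = q ^ (n * (n - 1))"
        by (simp add: power_sum[symmetric] sum_double_lessThan)
      moreover have "(\<Prod>i<n. 1 + q ^ (2 * (n - 1 - i) + 1)) = R"
        unfolding R_def
        by (rule prod.reindex_bij_witness[where i="\<lambda>i. n - 1 - i" and j="\<lambda>i. n - 1 - i"]) auto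
      ultimately show ?thesis by (simp add: prod.distrib)
    qed
    also have "(\<Prod>i<n. x + q ^ (2 * (n + i))) = (\<Prod>i<n. x * (1 + q ^ (2 * i + 1)))"
    proof (intro prod.cong refl)
      fix i
      have "2 * (n + i) = (2 * n - 1) + (2 * i + 1)" using n by auto
      hence "q ^ (2 * (n + i)) = x * q ^ (2 * i + 1)" unfolding x_def by (metis power_add)
      thus "x + q ^ (2 * (n + i)) = x * (1 + q ^ (2 * i + 1))" by (simp add: algebra_simps)
    qed
    also have "\<dots> = q ^ ((2 * n - 1) * n) * R"
      unfolding R_def x_def by (simp add: prod.distrib power_mult)
    finally show ?thesis unfolding e0_def by (simp add: power_add power2_eq_square mult_ac)
  qed
  define g where "g j = qbin q (2 * n) j * q ^ (j * (j - 1)) * x ^ (2 * n - j)" for j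
  define h where "h k = q ^ (k^2) * qbin q (2 * n) (n - k)" for k
  have RHS: "(\<Prod>i<2 * n. x + q ^ (2 * i)) = (\<Sum>j\<le>2 * n. g j)"
    unfolding g_def by (rule rothe_homog[OF nz x0])
  have gx: "g j = qbin q (2 * n) j * q ^ (j * (j - 1) + (2 * n - 1) * (2 * n - j))" for j
    unfolding g_def x_def by (simp add: power_add power_mult mult.assoc)
  have g1: "g (n - k) = q ^ e0 * h k" if "k \<le> n" for k
    unfolding gx h_def e0_def using expo[OF n that, of "n - k"] by (simp add: power_add)
  have g2: "g (n + k) = q ^ e0 * h k" if "k \<le> n" for k
  proof -
    have "qbin q (2 * n) (n + k) = qbin q (2 * n) (n - k)"
      unfolding qbin_def using that by (simp add: mult_ac mult_2 diff_diff_left)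
    thus ?thesis unfolding gx h_def e0_def using expo[OF n that, of "n + k"] by (simp add: power_add)
  qed
  have "(\<Sum>j\<le>2 * n. g j) = (\<Sum>j\<in>{0..n}. g j) + (\<Sum>j\<in>{n + 1..n + n}. g j)"
    using sum.ub_add_nat[of 0 n g n] by (simp add: atLeast0AtMost mult_2)
  also have "(\<Sum>j\<in>{0..n}. g j) = (\<Sum>k\<le>n. g (n - k))"
    by (rule sum.reindex_bij_witness[where i="\<lambda>k. n - k" and j="\<lambda>k. n - k"]) auto
  also have "\<dots> = q ^ e0 * (\<Sum>k\<le>n. h k)"
    unfolding sum_distrib_left by (intro sum.cong refl) (simp add: g1)
  also have "(\<Sum>j\<in>{n + 1..n + n}. g j) = (\<Sum>k\<in>{1..n}. g (k + n))"
    using sum.shift_bounds_cl_nat_ivl[of g 1 n n] by (simp add: add.commute)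
  also have "\<dots> = q ^ e0 * (\<Sum>k\<in>{1..n}. h k)"
    unfolding sum_distrib_left
  proof (intro sum.cong refl)
    fix k assume "k \<in> {1..n}"
    thus "g (k + n) = q ^ e0 * h k" using g2[of k] by (simp add: add.commute)
  qed
  also have "(\<Sum>k\<in>{1..n}. h k) = (\<Sum>k\<le>n. h k) - h 0"
  proof -
    have "(\<Sum>k\<le>n. h k) = h 0 + (\<Sum>k<n. h (Suc k))" by (rule sum.atMost_shift)
    moreover have "(\<Sum>k\<in>{Suc 0..n}. h k) = (\<Sum>k<n. h (Suc k))" by (rule sum.atLeast1_atMost_eq)
    ultimately show ?thesis by simp
  qed
  finally have "q ^ e0 * R ^ 2 = q ^ e0 * (2 * (\<Sum>k\<le>n. h k) - h 0)"
    using LHS RHS by (simp add: algebra_simps)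
  hence "R ^ 2 = 2 * (\<Sum>k\<le>n. h k) - h 0" using q0 by simp
  thus ?thesis unfolding R_def h_def qpoch_mq by simp
qed

lemma jtp_nz:
  fixes q :: complex assumes q: "norm q < 1" and q0: "q \<noteq> 0"
  shows "qpoch_inf (-q) (q^2) ^ 2 * qpoch_inf (q^2) (q^2) = 2 * (\<Sum>k. q ^ (k^2)) - 1"
    and "summable (\<lambda>k. norm (q ^ (k^2)))"
proof -
  define p where "p = q^2"
  have p: "norm p < 1" unfolding p_def using q by (simp add: norm_power power_less_one_iff)
  let ?P = "qpoch p p"
  let ?Pi = "qpoch_inf p p"
  have nz: "\<And>k. ?P k \<noteq> 0" using qpoch_nonzero[OF p] .
  have Pinz: "?Pi \<noteq> 0" using qpoch_inf_nonzero[OF p] .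
  have lim: "?P \<longlonglongrightarrow> ?Pi" using qpoch_LIMSEQ[OF p] .
  define r where "r = norm q"
  define U where "U = exp (1 / (1 - norm p))"
  define L where "L = exp (- (1 / (1 - norm p) ^ 2))"
  have r: "0 \<le> r" "r < 1" using q unfolding r_def by auto
  have Lpos: "L > 0" unfolding L_def by simp
  have up: "norm (?P k) \<le> U" for k unfolding U_def by (rule qpoch_upper[OF p])
  have lo: "L \<le> norm (?P k)" for k unfolding L_def by (rule qpoch_lower[OF p])
  define a where "a k n = (if k \<le> n then q ^ (k^2) * (?P (2 * n) / (?P (n - k) * ?P (n + k))) else 0)" for k n
  define c where "c k = q ^ (k^2) * (1 / ?Pi)" for k
  define M where "M k = r ^ k * (U / (L * L))" for k
  have qb: "qbin q (2 * n) (n - k) = ?P (2 * n) / (?P (n - k) * ?P (n + k))" if "k \<le> n" for n k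
  proof -
    have "2 * n - (n - k) = n + k" using that by simp
    thus ?thesis unfolding qbin_def p_def by simp
  qed
  have limit: "(\<lambda>n. a k n) \<longlonglongrightarrow> c k" for k
  proof -
    have l1: "(\<lambda>n. ?P (n - k)) \<longlonglongrightarrow> ?Pi" by (rule seq_offset_neg[OF lim])
    have l2: "(\<lambda>n. ?P (n + k)) \<longlonglongrightarrow> ?Pi" by (rule LIMSEQ_ignore_initial_segment[OF lim])
    have l3: "(\<lambda>n. ?P (2 * n)) \<longlonglongrightarrow> ?Pi"
    proof -
      have "strict_mono (\<lambda>n::nat. 2 * n)" by (rule strict_monoI) simp
      from LIMSEQ_subseq_LIMSEQ[OF lim this] show ?thesis by (simp add: o_def)
    qed
    have "(\<lambda>n. q ^ (k^2) * (?P (2 * n) / (?P (n - k) * ?P (n + k))))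
          \<longlonglongrightarrow> q ^ (k^2) * (?Pi / (?Pi * ?Pi))"
      by (rule tendsto_mult[OF tendsto_const tendsto_divide[OF l3 tendsto_mult[OF l1 l2]]])
         (use Pinz in simp)
    moreover have "eventually (\<lambda>n. q ^ (k^2) * (?P (2 * n) / (?P (n - k) * ?P (n + k))) = a k n) sequentially"
      unfolding a_def eventually_sequentially by auto
    ultimately have "(\<lambda>n. a k n) \<longlonglongrightarrow> q ^ (k^2) * (?Pi / (?Pi * ?Pi))"
      by (rule Lim_transform_eventually)
    moreover have "q ^ (k^2) * (?Pi / (?Pi * ?Pi)) = c k" unfolding c_def using Pinz by simp
    ultimately show ?thesis by simp
  qed
  have bound: "norm (a k n) \<le> M k" for k n
  proof (cases "k \<le> n")
    case True
    have "norm (a k n) = norm q ^ (k^2) * (norm (?P (2 * n)) / (norm (?P (n - k)) * norm (?P (n + k))))"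
      using True unfolding a_def by (simp add: norm_mult norm_divide norm_power)
    also have "\<dots> \<le> r ^ k * (U / (L * L))"
    proof (rule mult_mono)
      show "norm q ^ (k^2) \<le> r ^ k" unfolding r_def
        by (rule power_decreasing) (use q in \<open>auto simp: power2_eq_square\<close>)
      show "norm (?P (2 * n)) / (norm (?P (n - k)) * norm (?P (n + k))) \<le> U / (L * L)"
      proof (rule frac_le)
        show "0 \<le> U" unfolding U_def by simp
        show "0 < L * L" using Lpos by simp
        show "L * L \<le> norm (?P (n - k)) * norm (?P (n + k))"
          by (rule mult_mono) (use lo Lpos in \<open>auto simp: less_imp_le\<close>)
      qed (use up in auto)
    qed (use r Lpos in \<open>auto simp: U_def\<close>)
    finally show ?thesis unfolding M_def .
  next
    case False
    have "0 \<le> U / (L * L)" using Lpos unfolding U_def by simp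
    hence "0 \<le> r ^ k * (U / (L * L))" using r by (intro mult_nonneg_nonneg) auto
    then show ?thesis unfolding a_def M_def using False by simp
  qed
  have sumM: "summable M" unfolding M_def
    by (intro summable_mult2 summable_geometric) (use r in auto)
  have T: "eventually (\<lambda>n. summable (\<lambda>k. norm (a k n))) sequentially \<and>
           summable (\<lambda>k. norm (c k)) \<and>
           ((\<lambda>n. suminf (\<lambda>k. a k n)) \<longlonglongrightarrow> suminf c)"
    by (rule tannerys_theorem[OF limit _ sumM]) (use bound in \<open>auto intro: always_eventually\<close>)
  have nz2: "\<And>k. qpoch (q^2) (q^2) k \<noteq> 0" using nz unfolding p_def .
  have fin: "suminf (\<lambda>k. a k n) = (qpoch (-q) (q^2) n ^ 2 + a 0 n) / 2" for n
  proof -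
    have "suminf (\<lambda>k. a k n) = (\<Sum>k\<le>n. a k n)"
      by (rule suminf_finite) (auto simp: a_def)
    also have "\<dots> = (\<Sum>k\<le>n. q ^ (k^2) * qbin q (2 * n) (n - k))"
      unfolding a_def by (intro sum.cong refl) (simp add: qb)
    also have "\<dots> = (qpoch (-q) (q^2) n ^ 2 + qbin q (2 * n) n) / 2"
      using jtp_finite[OF nz2 q0, of n] by simp
    also have "qbin q (2 * n) n = a 0 n" unfolding a_def using qb[of 0 n] by simp
    finally show ?thesis .
  qed
  have X: "(\<lambda>n. qpoch (-q) (q^2) n) \<longlonglongrightarrow> qpoch_inf (-q) (q^2)"
    using qpoch_LIMSEQ[OF p[unfolded p_def]] .
  have "(\<lambda>n. (qpoch (-q) (q^2) n ^ 2 + a 0 n) / 2) \<longlonglongrightarrow> (qpoch_inf (-q) (q^2) ^ 2 + c 0) / 2"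
    by (intro tendsto_divide tendsto_add tendsto_power X limit tendsto_const) simp
  moreover have "(\<lambda>n. (qpoch (-q) (q^2) n ^ 2 + a 0 n) / 2) \<longlonglongrightarrow> suminf c"
    using T fin by simp
  ultimately have eq: "(qpoch_inf (-q) (q^2) ^ 2 + c 0) / 2 = suminf c" using LIMSEQ_unique by blast
  have sc: "summable (\<lambda>k. norm (q ^ (k^2)))"
  proof -
    have "summable (\<lambda>k. norm (c k) * norm ?Pi)" using T by (intro summable_mult2) auto
    moreover have "norm (c k) * norm ?Pi = norm (q ^ (k^2))" for k
      unfolding c_def using Pinz by (simp add: norm_mult norm_divide)
    ultimately show ?thesis by simp
  qed
  thus "summable (\<lambda>k. norm (q ^ (k^2)))" .
  have "suminf c = (\<Sum>k. q ^ (k^2)) * (1 / ?Pi)"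
    unfolding c_def by (rule suminf_mult2[symmetric]) (rule summable_norm_cancel[OF sc])
  with eq have "qpoch_inf (-q) (q^2) ^ 2 + 1 / ?Pi = 2 * ((\<Sum>k. q ^ (k^2)) * (1 / ?Pi))"
    unfolding c_def by simp
  hence "(qpoch_inf (-q) (q^2) ^ 2 + 1 / ?Pi) * ?Pi = 2 * ((\<Sum>k. q ^ (k^2)) * (1 / ?Pi)) * ?Pi" by simp
  thus "qpoch_inf (-q) (q^2) ^ 2 * qpoch_inf (q^2) (q^2) = 2 * (\<Sum>k. q ^ (k^2)) - 1"
    using Pinz unfolding p_def by (simp add: algebra_simps)
qed

lemma jtp:
  fixes q :: complex assumes q: "norm q < 1"
  shows "qpoch_inf (-q) (q^2) ^ 2 * qpoch_inf (q^2) (q^2) = 2 * (\<Sum>k. q ^ (k^2)) - 1"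
    and "summable (\<lambda>k. norm (q ^ (k^2)))"
proof -
  have "qpoch_inf (-q) (q^2) ^ 2 * qpoch_inf (q^2) (q^2) = 2 * (\<Sum>k. q ^ (k^2)) - 1 \<and>
        summable (\<lambda>k. norm (q ^ (k^2)))"
  proof (cases "q = 0")
    case True
    have s: "(\<Sum>k. (0::complex) ^ (k^2)) = 1"
    proof -
      have "(\<Sum>k. (0::complex) ^ (k^2)) = (\<Sum>k\<in>{0}. (0::complex) ^ (k^2))"
        by (rule suminf_finite) auto
      thus ?thesis by simp
    qed
    have "summable (\<lambda>k. norm ((0::complex) ^ (k^2)))"
      by (rule summable_finite[of "{0}"]) auto
    thus ?thesis using True s by (simp add: qpoch_inf_def)
  next
    case False
    then show ?thesis using jtp_nz[OF q False] by simp
  qed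
  thus "qpoch_inf (-q) (q^2) ^ 2 * qpoch_inf (q^2) (q^2) = 2 * (\<Sum>k. q ^ (k^2)) - 1"
    and "summable (\<lambda>k. norm (q ^ (k^2)))" by auto
qed

lemma norm_summable_has_sum:
  fixes f :: "nat \<Rightarrow> complex"
  assumes "summable (\<lambda>n. norm (f n))" "f sums S"
  shows "(f has_sum S) UNIV"
  by (rule norm_summable_imp_has_sum[OF assms])

lemma expo2: "2 * (i^2 + j^2 - i * j) \<ge> i + (j::nat)"
proof -
  have h1: "0 \<le> (int i - int j)^2" by simp
  have h2: "(int i - int j)^2 = int i^2 + int j^2 - 2 * (int i * int j)"
    by (simp add: power2_eq_square algebra_simps)
  have h3: "0 \<le> int i * int j" by simp
  have "int i * int j \<le> int i^2 + int j^2" using h1 h2 h3 by arith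
  hence "int (i * j) \<le> int (i^2 + j^2)" by simp
  hence ij: "i * j \<le> i^2 + j^2" by (simp only: of_nat_le_iff)
  have "i \<le> i^2" "j \<le> j^2" by (simp_all add: power2_eq_square le_square)
  hence "int i \<le> int i ^ 2" "int j \<le> int j ^ 2" by (metis of_nat_le_iff of_nat_power)+
  moreover have lin: "\<And>A B P x y::int. x \<le> A \<Longrightarrow> y \<le> B \<Longrightarrow> 0 \<le> A + B - 2 * P \<Longrightarrow> x + y \<le> 2 * (A + B - P)"
    by arith
  ultimately have "2 * (int i ^ 2 + int j ^ 2 - int i * int j) \<ge> int i + int j"
    using h1 h2 by (metis lin)
  moreover have "int (2 * (i^2 + j^2 - i * j)) = 2 * (int i ^ 2 + int j ^ 2 - int i * int j)"
    using ij by (simp add: of_nat_diff)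
  ultimately show ?thesis by arith
qed

lemma base_summable:
  fixes q :: complex assumes q: "norm q < 1"
  shows "(\<lambda>(i, j). q ^ (i^2 + j^2 - i * j) / (qpoch q q i * qpoch q q j)) summable_on UNIV"
proof -
  define r where "r = norm q"
  define s where "s = sqrt r"
  define L where "L = exp (- (1 / (1 - r) ^ 2))"
  define C where "C = 1 / (L * L)"
  have r: "0 \<le> r" "r < 1" using q unfolding r_def by auto
  have s: "0 \<le> s" "s < 1" "s ^ 2 = r" using r unfolding s_def by auto
  have Lpos: "L > 0" unfolding L_def by simp
  have C: "C > 0" unfolding C_def using Lpos by simp
  have lo: "L \<le> norm (qpoch q q k)" for k unfolding L_def r_def by (rule qpoch_lower[OF q])
  define G where "G = (\<lambda>(i::nat, j::nat). s ^ i * s ^ j * C)"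
  have Gnn: "0 \<le> G x" for x unfolding G_def using s C by (auto simp: case_prod_beta)
  have geo: "((\<lambda>j. s ^ j) has_sum (1 / (1 - s))) UNIV"
  proof (rule sums_nonneg_imp_has_sum)
    show "(\<lambda>j. s ^ j) sums (1 / (1 - s))" using geometric_sums[of s] s by simp
    show "0 \<le> s ^ n" for n using s by simp
  qed
  have Gs: "G summable_on UNIV"
  proof -
    have "G summable_on Sigma UNIV (\<lambda>_. UNIV)"
    proof (rule summable_on_SigmaI[where g="\<lambda>i. s ^ i * (1 / (1 - s)) * C"])
      fix i :: nat
      have "((\<lambda>j. s ^ i * s ^ j * C) has_sum s ^ i * (1 / (1 - s)) * C) UNIV"
        by (rule has_sum_cmult_left[OF has_sum_cmult_right[OF geo]])
      thus "((\<lambda>j. G (i, j)) has_sum s ^ i * (1 / (1 - s)) * C) UNIV"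
        unfolding G_def by simp
      have "((\<lambda>i. s ^ i * (1 / (1 - s)) * C) has_sum (1 / (1 - s)) * (1 / (1 - s)) * C) UNIV"
        by (rule has_sum_cmult_left[OF has_sum_cmult_left[OF geo]])
      thus "(\<lambda>i. s ^ i * (1 / (1 - s)) * C) summable_on UNIV"
        by (auto simp: summable_on_def)
    next
      fix i j show "0 \<le> G (i, j)" by (rule Gnn)
    qed
    thus ?thesis by simp
  qed
  have nG: "(\<lambda>x. norm (G x)) summable_on UNIV"
    using Gs by (rule summable_on_cong[THEN iffD1, rotated]) (use Gnn in auto)
  show ?thesis
  proof (rule Infinite_Sum.abs_summable_summable, rule Infinite_Sum.abs_summable_on_comparison_test[OF nG])
    fix x :: "nat \<times> nat"
    obtain i j where x: "x = (i, j)" by (cases x)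
    have "norm (q ^ (i^2 + j^2 - i * j) / (qpoch q q i * qpoch q q j))
          = r ^ (i^2 + j^2 - i * j) / (norm (qpoch q q i) * norm (qpoch q q j))"
      unfolding r_def by (simp add: norm_mult norm_divide norm_power)
    also have "\<dots> \<le> (s ^ i * s ^ j) / (L * L)"
    proof (rule frac_le)
      have "r ^ (i^2 + j^2 - i * j) = s ^ (2 * (i^2 + j^2 - i * j))"
        using s by (simp add: power_mult)
      also have "\<dots> \<le> s ^ (i + j)" by (rule power_decreasing[OF expo2]) (use s in auto)
      finally show "r ^ (i^2 + j^2 - i * j) \<le> s ^ i * s ^ j" by (simp add: power_add)
      show "0 \<le> s ^ i * s ^ j" using s by simp
      show "0 < L * L" using Lpos by simp
      show "L * L \<le> norm (qpoch q q i) * norm (qpoch q q j)"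
        by (rule mult_mono) (use lo Lpos in \<open>auto simp: less_imp_le\<close>)
    qed
    also have "\<dots> = G x" unfolding G_def x C_def by simp
    also have "\<dots> = norm (G x)" using Gnn[of x] by simp
    finally show "norm (case x of (i, j) \<Rightarrow> q ^ (i^2 + j^2 - i * j) / (qpoch q q i * qpoch q q j)) \<le> norm (G x)"
      unfolding x by simp
  qed
qed

lemma base_case:
  fixes q :: complex assumes q: "norm q < 1"
  shows "((\<lambda>(i, j). q ^ (i^2 + j^2 - i * j) / (qpoch q q i * qpoch q q j)) has_sum
          ((2 * (\<Sum>k. q ^ (k^2)) - 1) / qpoch_inf q q)) UNIV"
proof -
  define F where "F = (\<lambda>(i::nat, j::nat). q ^ (i^2 + j^2 - i * j) / (qpoch q q i * qpoch q q j))"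
  define S where "S = (\<Sum>k. q ^ (k^2))"
  define Pi where "Pi = qpoch_inf q q"
  define t where "t d b = q ^ (b * (b + d)) / (qpoch q q b * qpoch q q (b + d))" for d b
  have FS: "F summable_on UNIV" unfolding F_def by (rule base_summable[OF q])
  have tS: "((\<lambda>b. t d b) has_sum (1 / Pi)) UNIV" for d
    unfolding t_def Pi_def by (rule norm_summable_has_sum[OF durfee(2)[OF q] durfee(1)[OF q]])
  have sq: "summable (\<lambda>k. norm (q ^ (k^2)))" by (rule jtp(2)[OF q])
  have sS: "(\<lambda>k. q ^ (k^2)) sums S" unfolding S_def by (rule summable_sums[OF summable_norm_cancel[OF sq]])
  have hS: "((\<lambda>k. q ^ (k^2)) has_sum S) UNIV" by (rule norm_summable_has_sum[OF sq sS])
  have hS1: "((\<lambda>k. q ^ ((Suc k)^2)) has_sum (S - 1)) UNIV"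
  proof (rule norm_summable_has_sum)
    show "summable (\<lambda>k. norm (q ^ ((Suc k)^2)))" using sq by (subst summable_Suc_iff)
    show "(\<lambda>k. q ^ ((Suc k)^2)) sums (S - 1)"
      using sS by (subst sums_Suc_iff) simp
  qed
  define R1 where "R1 = {(i::nat, j::nat). j \<le> i}"
  define R2 where "R2 = {(i::nat, j::nat). i < j}"
  have bij1: "bij_betw (\<lambda>(d, b). (b + d, b)) UNIV R1"
    unfolding R1_def by (rule bij_betwI[where g="\<lambda>(i, j). (i - j, j)"]) auto
  have bij2: "bij_betw (\<lambda>(d, b). (b, b + Suc d)) UNIV R2"
    unfolding R2_def by (rule bij_betwI[where g="\<lambda>(i, j). (j - i - 1, i)"]) auto
  have F1: "F (b + d, b) = q ^ (d^2) * t d b" for d b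
  proof -
    have "(b + d)^2 + b^2 = (d^2 + b * (b + d)) + (b + d) * b" by (simp add: power2_eq_square algebra_simps)
    hence "(b + d)^2 + b^2 - (b + d) * b = d^2 + b * (b + d)" by simp
    thus ?thesis unfolding F_def t_def by (simp add: power_add mult_ac)
  qed
  have F2: "F (b, b + n) = q ^ (n^2) * t n b" for n b
  proof -
    have "b^2 + (b + n)^2 = (n^2 + b * (b + n)) + b * (b + n)"
      by (simp add: power2_eq_square algebra_simps)
    hence "b^2 + (b + n)^2 - b * (b + n) = n^2 + b * (b + n)" by simp
    thus ?thesis unfolding F_def t_def by (simp add: power_add mult_ac)
  qed
  have H1: "(F has_sum (S * (1 / Pi))) R1"
  proof -
    have "F summable_on R1" by (rule summable_on_subset_banach[OF FS]) simp
    hence sm: "(\<lambda>x. F ((\<lambda>(d, b). (b + d, b)) x)) summable_on UNIV"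
      using summable_on_reindex_bij_betw[OF bij1] by blast
    have "((\<lambda>(d, b). F (b + d, b)) has_sum (S * (1 / Pi))) (Sigma UNIV (\<lambda>_. UNIV))"
    proof (rule has_sum_SigmaI[where g="\<lambda>d. q ^ (d^2) * (1 / Pi)"])
      fix d :: nat
      show "((\<lambda>b. case (d, b) of (d, b) \<Rightarrow> F (b + d, b)) has_sum q ^ (d^2) * (1 / Pi)) UNIV"
        unfolding F1 using has_sum_cmult_right[OF tS, of "q ^ (d^2)" d] by simp
      show "((\<lambda>d. q ^ (d^2) * (1 / Pi)) has_sum S * (1 / Pi)) UNIV"
        by (rule has_sum_cmult_left[OF hS])
      show "(\<lambda>(d, b). F (b + d, b)) summable_on Sigma UNIV (\<lambda>_. UNIV)"
        using sm by (simp add: case_prod_unfold)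
    qed
    hence "((\<lambda>x. F ((\<lambda>(d, b). (b + d, b)) x)) has_sum (S * (1 / Pi))) UNIV"
      by (simp add: case_prod_unfold)
    thus ?thesis using has_sum_reindex_bij_betw[OF bij1] by blast
  qed
  have H2: "(F has_sum ((S - 1) * (1 / Pi))) R2"
  proof -
    have "F summable_on R2" by (rule summable_on_subset_banach[OF FS]) simp
    hence sm: "(\<lambda>x. F ((\<lambda>(d, b). (b, b + Suc d)) x)) summable_on UNIV"
      using summable_on_reindex_bij_betw[OF bij2] by blast
    have "((\<lambda>(d, b). F (b, b + Suc d)) has_sum ((S - 1) * (1 / Pi))) (Sigma UNIV (\<lambda>_. UNIV))"
    proof (rule has_sum_SigmaI[where g="\<lambda>d. q ^ ((Suc d)^2) * (1 / Pi)"])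
      fix d :: nat
      show "((\<lambda>b. case (d, b) of (d, b) \<Rightarrow> F (b, b + Suc d)) has_sum q ^ ((Suc d)^2) * (1 / Pi)) UNIV"
        unfolding F2 using has_sum_cmult_right[OF tS, of "q ^ ((Suc d)^2)" "Suc d"] by simp
      show "((\<lambda>d. q ^ ((Suc d)^2) * (1 / Pi)) has_sum (S - 1) * (1 / Pi)) UNIV"
        by (rule has_sum_cmult_left[OF hS1])
      show "(\<lambda>(d, b). F (b, b + Suc d)) summable_on Sigma UNIV (\<lambda>_. UNIV)"
        using sm by (simp add: case_prod_unfold)
    qed
    hence "((\<lambda>x. F ((\<lambda>(d, b). (b, b + Suc d)) x)) has_sum ((S - 1) * (1 / Pi))) UNIV"
      by (simp add: case_prod_unfold)
    thus ?thesis using has_sum_reindex_bij_betw[OF bij2] by blast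
  qed
  have "(F has_sum (S * (1 / Pi) + (S - 1) * (1 / Pi))) (R1 \<union> R2)"
    by (rule has_sum_Un_disjoint[OF H1 H2]) (auto simp: R1_def R2_def)
  moreover have "R1 \<union> R2 = UNIV" unfolding R1_def R2_def by auto
  moreover have "S * (1 / Pi) + (S - 1) * (1 / Pi) = (2 * S - 1) / Pi"
  proof -
    have "S * (1 / Pi) + (S - 1) * (1 / Pi) = (S + (S - 1)) * (1 / Pi)" by (rule distrib_right[symmetric])
    moreover have "S + (S - 1) = 2 * S - 1" by simp
    ultimately show ?thesis by simp
  qed
  ultimately show ?thesis unfolding F_def S_def Pi_def by simp
qed

lemma Qform_nonneg: "0 \<le> Qform l n"
proof -
  define A where "A = int (n 1) + (\<Sum>i=3..l. int (n i))"
  define B where "B = int (n 2) + (\<Sum>i=3..l. int (n i))"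
  have A: "0 \<le> A" and B: "0 \<le> B" unfolding A_def B_def by (auto intro!: add_nonneg_nonneg sum_nonneg)
  have "A^2 - A*B + B^2 = (A - B)^2 + A * B" by (simp add: power2_eq_square algebra_simps)
  also have "\<dots> \<ge> 0" using A B by simp
  finally have 1: "0 \<le> A^2 - A*B + B^2" .
  have 2: "0 \<le> (\<Sum>i=4..l. (int (n 1) + (\<Sum>j=i..l. int (n j))) * (int (n 2) + (\<Sum>j=i..l. int (n j))))"
    by (intro sum_nonneg mult_nonneg_nonneg add_nonneg_nonneg) (auto intro: sum_nonneg)
  have 3: "0 \<le> int (n 1) * int (n 2)" by simp
  show ?thesis unfolding Qform_def Let_def A_def[symmetric] B_def[symmetric] using 1 2 3 by linarith
qed

lemma Qform_step:
  fixes l k :: nat and y :: "nat \<Rightarrow> nat"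
  assumes l: "3 \<le> l" and k1: "k \<le> y 1" and k2: "k \<le> y 2"
  shows "Qform (Suc l) (y(1 := y 1 - k, 2 := y 2 - k, Suc l := k))
       = Qform l y + int ((y 1 - k) * (y 2 - k))"
proof -
  define x where "x = y(1 := y 1 - k, 2 := y 2 - k, Suc l := k)"
  have x1: "x 1 = y 1 - k" and x2: "x 2 = y 2 - k" and xl: "x (Suc l) = k"
    unfolding x_def using l by auto
  have xi: "x i = y i" if "3 \<le> i" "i \<le> l" for i unfolding x_def using that by auto
  have s3: "(\<Sum>i=3..Suc l. int (x i)) = (\<Sum>i=3..l. int (y i)) + int k"
  proof -
    have "(\<Sum>i=3..Suc l. int (x i)) = (\<Sum>i=3..l. int (x i)) + int (x (Suc l))"
      using l by (simp add: sum.cl_ivl_Suc)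
    also have "(\<Sum>i=3..l. int (x i)) = (\<Sum>i=3..l. int (y i))" by (intro sum.cong refl) (simp add: xi)
    finally show ?thesis using xl by simp
  qed
  have sj: "(\<Sum>j=i..Suc l. int (x j)) = (\<Sum>j=i..l. int (y j)) + int k" if "4 \<le> i" "i \<le> l" for i
  proof -
    have "(\<Sum>j=i..Suc l. int (x j)) = (\<Sum>j=i..l. int (x j)) + int (x (Suc l))"
      using that by (simp add: sum.cl_ivl_Suc)
    also have "(\<Sum>j=i..l. int (x j)) = (\<Sum>j=i..l. int (y j))" by (intro sum.cong refl) (use that in \<open>simp add: xi\<close>)
    finally show ?thesis using xl by simp
  qed
  have A: "int (x 1) + (\<Sum>i=3..Suc l. int (x i)) = int (y 1) + (\<Sum>i=3..l. int (y i))"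
    using s3 x1 k1 by (simp add: of_nat_diff)
  have B: "int (x 2) + (\<Sum>i=3..Suc l. int (x i)) = int (y 2) + (\<Sum>i=3..l. int (y i))"
    using s3 x2 k2 by (simp add: of_nat_diff)
  have S: "(\<Sum>i=4..Suc l. (int (x 1) + (\<Sum>j=i..Suc l. int (x j))) * (int (x 2) + (\<Sum>j=i..Suc l. int (x j))))
         = (\<Sum>i=4..l. (int (y 1) + (\<Sum>j=i..l. int (y j))) * (int (y 2) + (\<Sum>j=i..l. int (y j))))
           + int (y 1) * int (y 2)"
  proof -
    have "(\<Sum>i=4..Suc l. (int (x 1) + (\<Sum>j=i..Suc l. int (x j))) * (int (x 2) + (\<Sum>j=i..Suc l. int (x j))))
        = (\<Sum>i=4..l. (int (x 1) + (\<Sum>j=i..Suc l. int (x j))) * (int (x 2) + (\<Sum>j=i..Suc l. int (x j))))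
          + (int (x 1) + int (x (Suc l))) * (int (x 2) + int (x (Suc l)))"
      using l by (simp add: sum.cl_ivl_Suc)
    also have "(\<Sum>i=4..l. (int (x 1) + (\<Sum>j=i..Suc l. int (x j))) * (int (x 2) + (\<Sum>j=i..Suc l. int (x j))))
        = (\<Sum>i=4..l. (int (y 1) + (\<Sum>j=i..l. int (y j))) * (int (y 2) + (\<Sum>j=i..l. int (y j))))"
    proof (intro sum.cong refl)
      fix i assume "i \<in> {4..l}"
      hence "4 \<le> i" "i \<le> l" by auto
      thus "(int (x 1) + (\<Sum>j=i..Suc l. int (x j))) * (int (x 2) + (\<Sum>j=i..Suc l. int (x j)))
          = (int (y 1) + (\<Sum>j=i..l. int (y j))) * (int (y 2) + (\<Sum>j=i..l. int (y j)))"
        using sj x1 x2 k1 k2 by (simp add: of_nat_diff)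
    qed
    also have "(int (x 1) + int (x (Suc l))) * (int (x 2) + int (x (Suc l))) = int (y 1) * int (y 2)"
      using x1 x2 xl k1 k2 by (simp add: of_nat_diff)
    finally show ?thesis .
  qed
  show ?thesis
    unfolding x_def[symmetric] Qform_def Let_def A B S
    using x1 x2 k1 k2 by (simp add: of_nat_diff)
qed

lemma Qform_3:
  fixes x :: "nat \<Rightarrow> nat"
  shows "Qform 3 x = int ((x 1 + x 3)^2 + (x 2 + x 3)^2 - (x 1 + x 3) * (x 2 + x 3)) + int (x 1 * x 2)"
proof -
  have le: "(x 1 + x 3) * (x 2 + x 3) \<le> (x 1 + x 3)^2 + (x 2 + x 3)^2"
  proof -
    have "\<And>a b :: nat. a * b \<le> a^2 + b^2"
      by (metis add.commute le_add2 le_square linear mult_le_mono1 mult_le_mono2 order_trans power2_eq_square)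
    thus ?thesis .
  qed
  have "{3..3::nat} = {3}" by auto
  thus ?thesis unfolding Qform_def Let_def using le by (simp add: of_nat_diff power2_eq_square)
qed

definition Tq :: "nat \<Rightarrow> complex \<Rightarrow> (nat \<Rightarrow> nat) \<Rightarrow> complex" where
  "Tq l q n = q ^ nat (Qform l n) / (\<Prod>i\<in>{1..l}. qpoch q q (n i))"

definition Fb :: "complex \<Rightarrow> nat \<times> nat \<Rightarrow> complex" where
  "Fb q = (\<lambda>(i, j). q ^ (i^2 + j^2 - i * j) / (qpoch q q i * qpoch q q j))"

lemma qpoch_of_real: "qpoch (complex_of_real r) (complex_of_real r) k = complex_of_real (\<Prod>j<k. 1 - r * r ^ j)"
  by (simp add: qpoch_def)

lemma qpoch_norm_ge:
  fixes q :: complex assumes q: "norm q < 1"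
  shows "(\<Prod>j<k. 1 - norm q * norm q ^ j) \<le> norm (qpoch q q k)"
    and "0 < (\<Prod>j<k. 1 - norm q * norm q ^ j)"
proof -
  have lt: "norm q * norm q ^ j < 1" for j
  proof -
    have "norm q ^ Suc j < 1" using q power_less_one_iff[of "norm q" "Suc j"] by (simp del: power_Suc)
    thus ?thesis by simp
  qed
  show "0 < (\<Prod>j<k. 1 - norm q * norm q ^ j)" using lt by (intro prod_pos) auto
  have "(\<Prod>j<k. 1 - norm q * norm q ^ j) \<le> (\<Prod>j<k. norm (1 - q * q ^ j))"
  proof (rule prod_mono, safe)
    fix j
    show "0 \<le> 1 - norm q * norm q ^ j" using lt[of j] by simp
    show "1 - norm q * norm q ^ j \<le> norm (1 - q * q ^ j)"
      using norm_triangle_ineq2[of 1 "q * q ^ j"] by (simp add: norm_mult norm_power)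
  qed
  thus "(\<Prod>j<k. 1 - norm q * norm q ^ j) \<le> norm (qpoch q q k)"
    by (simp add: qpoch_def prod_norm)
qed

lemma majorant:
  fixes q :: complex assumes q: "norm q < 1" and I: "finite I"
  shows "norm (q ^ N / (\<Prod>i\<in>I. qpoch q q (n i)))
         \<le> Re (complex_of_real (norm q) ^ N / (\<Prod>i\<in>I. qpoch (complex_of_real (norm q)) (complex_of_real (norm q)) (n i)))"
proof -
  define r where "r = norm q"
  define Pr where "Pr k = (\<Prod>j<k. 1 - r * r ^ j)" for k
  have ge: "Pr k \<le> norm (qpoch q q k)" and pos: "0 < Pr k" for k
    unfolding Pr_def r_def using qpoch_norm_ge[OF q] by auto
  have R: "complex_of_real r ^ N / (\<Prod>i\<in>I. qpoch (complex_of_real r) (complex_of_real r) (n i))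
         = complex_of_real (r ^ N / (\<Prod>i\<in>I. Pr (n i)))"
    unfolding qpoch_of_real Pr_def by simp
  have "norm (q ^ N / (\<Prod>i\<in>I. qpoch q q (n i))) = r ^ N / (\<Prod>i\<in>I. norm (qpoch q q (n i)))"
    unfolding r_def by (simp add: norm_divide norm_power prod_norm)
  also have "\<dots> \<le> r ^ N / (\<Prod>i\<in>I. Pr (n i))"
  proof (rule divide_left_mono)
    show "0 \<le> r ^ N" unfolding r_def by simp
    have p1: "0 < (\<Prod>i\<in>I. Pr (n i))" by (rule prod_pos) (use pos in blast)
    show le: "(\<Prod>i\<in>I. Pr (n i)) \<le> (\<Prod>i\<in>I. norm (qpoch q q (n i)))"
    proof (rule prod_mono)
      fix i assume "i \<in> I"
      show "0 \<le> Pr (n i) \<and> Pr (n i) \<le> norm (qpoch q q (n i))"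
        using pos[of "n i"] ge[of "n i"] by simp
    qed
    have p2: "0 < (\<Prod>i\<in>I. norm (qpoch q q (n i)))" using p1 le by linarith
    show "0 < (\<Prod>i\<in>I. norm (qpoch q q (n i))) * (\<Prod>i\<in>I. Pr (n i))"
      using p1 p2 by simp
  qed
  finally show ?thesis unfolding r_def[symmetric] R by (simp only: Re_complex_of_real)
qed

lemma powi_Qform: "q powi (Qform l n) = q ^ nat (Qform l n)"
proof -
  have e: "int (nat (Qform l n)) = Qform l n" using Qform_nonneg[of l n] by simp
  have "q powi int (nat (Qform l n)) = q ^ nat (Qform l n)" by (rule power_int_of_nat)
  thus ?thesis unfolding e .
qed

lemma norm_of_real_lt: "norm q < 1 \<Longrightarrow> norm (complex_of_real (norm q)) < 1" by simp

definition x3 :: "nat \<Rightarrow> nat \<Rightarrow> nat \<Rightarrow> nat \<Rightarrow> nat" where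
  "x3 a b k = (\<lambda>i. if i = 1 then a - k else if i = 2 then b - k else if i = 3 then k else undefined)"

lemma fiber3:
  "{x \<in> Pi\<^sub>E {1..3::nat} (\<lambda>_. UNIV::nat set). (x 1 + x 3, x 2 + x 3) = (a, b)} = x3 a b ` {..min a b}"
proof (intro equalityI subsetI)
  fix x :: "nat \<Rightarrow> nat" assume x: "x \<in> {x \<in> Pi\<^sub>E {1..3} (\<lambda>_. UNIV). (x 1 + x 3, x 2 + x 3) = (a, b)}"
  hence xP: "x \<in> Pi\<^sub>E {1..3} (\<lambda>_. UNIV)" and e: "x 1 + x 3 = a" "x 2 + x 3 = b" by auto
  have "x = x3 a b (x 3)"
  proof (rule ext)
    fix i
    show "x i = x3 a b (x 3) i"
    proof (cases "i \<in> {1..3}")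
      case True
      hence "1 \<le> i" "i \<le> 3" by auto
      hence "i = 1 \<or> i = 2 \<or> i = 3" by presburger
      thus ?thesis unfolding x3_def using e by auto
    next
      case False
      hence "x i = undefined" by (rule PiE_arb[OF xP])
      moreover have "i \<noteq> 1" "i \<noteq> 2" "i \<noteq> 3" using False by auto
      ultimately show ?thesis unfolding x3_def by simp
    qed
  qed
  moreover have "x 3 \<in> {..min a b}" using e by auto
  ultimately show "x \<in> x3 a b ` {..min a b}" by (rule image_eqI)
next
  fix x assume "x \<in> x3 a b ` {..min a b}"
  then obtain k where k: "k \<le> min a b" and x: "x = x3 a b k" by auto
  have "x \<in> Pi\<^sub>E {1..3} (\<lambda>_. UNIV)" unfolding x x3_def PiE_iff extensional_def by auto
  moreover have "(x 1 + x 3, x 2 + x 3) = (a, b)" unfolding x x3_def using k by auto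
  ultimately show "x \<in> {x \<in> Pi\<^sub>E {1..3} (\<lambda>_. UNIV). (x 1 + x 3, x 2 + x 3) = (a, b)}" by blast
qed

lemma inj_x3: "inj_on (x3 a b) K"
proof (rule inj_onI)
  fix k k' assume "x3 a b k = x3 a b k'"
  hence "x3 a b k 3 = x3 a b k' 3" by simp
  thus "k = k'" unfolding x3_def by simp
qed

lemma prod_1_3: "(\<Prod>i\<in>{1..3::nat}. f i) = f 1 * f 2 * f 3"
proof -
  have "{1..3::nat} = {1, 2, 3}" by auto
  thus ?thesis by (simp add: mult.assoc)
qed

lemma fiber3_sum:
  fixes q :: complex assumes q: "norm q < 1"
  shows "(\<Sum>x\<in>{x \<in> Pi\<^sub>E {1..3::nat} (\<lambda>_. UNIV::nat set). (x 1 + x 3, x 2 + x 3) = (a, b)}. Tq 3 q x) = Fb q (a, b)"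
proof -
  have nz: "\<And>k. qpoch q q k \<noteq> 0" by (rule qpoch_nonzero[OF q])
  have "(\<Sum>x\<in>{x \<in> Pi\<^sub>E {1..3::nat} (\<lambda>_. UNIV::nat set). (x 1 + x 3, x 2 + x 3) = (a, b)}. Tq 3 q x)
        = (\<Sum>k\<le>min a b. Tq 3 q (x3 a b k))"
    unfolding fiber3 by (rule sum.reindex[OF inj_x3, unfolded o_def])
  also have "\<dots> = (\<Sum>k\<le>min a b. q ^ (a^2 + b^2 - a * b) *
        (q ^ ((a - k) * (b - k)) / (qpoch q q (a - k) * qpoch q q (b - k) * qpoch q q k)))"
  proof (intro sum.cong refl)
    fix k assume k: "k \<in> {..min a b}"
    have x1: "x3 a b k 1 = a - k" "x3 a b k 2 = b - k" "x3 a b k 3 = k" unfolding x3_def by auto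
    have s1: "x3 a b k 1 + x3 a b k 3 = a" "x3 a b k 2 + x3 a b k 3 = b" using k x1 by auto
    have "nat (Qform 3 (x3 a b k)) = (a^2 + b^2 - a * b) + (a - k) * (b - k)"
      unfolding Qform_3 unfolding s1 unfolding x1(1,2) by (simp only: nat_int_add)
    thus "Tq 3 q (x3 a b k) = q ^ (a^2 + b^2 - a * b) *
        (q ^ ((a - k) * (b - k)) / (qpoch q q (a - k) * qpoch q q (b - k) * qpoch q q k))"
      unfolding Tq_def prod_1_3 x1 by (simp add: power_add)
  qed
  also have "\<dots> = q ^ (a^2 + b^2 - a * b) * (1 / (qpoch q q a * qpoch q q b))"
    unfolding sum_distrib_left[symmetric] key_sym[OF nz] ..
  also have "\<dots> = Fb q (a, b)" unfolding Fb_def by simp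
  finally show ?thesis .
qed

definition Vq :: "complex \<Rightarrow> complex" where
  "Vq q = (2 * (\<Sum>k. q ^ (k^2)) - 1) / qpoch_inf q q"

lemma Fb_has_sum: "norm q < 1 \<Longrightarrow> (Fb q has_sum Vq q) UNIV"
  unfolding Fb_def Vq_def by (rule base_case)

lemma Tq_majorant:
  fixes q :: complex assumes q: "norm q < 1"
  shows "norm (Tq l q x) \<le> Re (Tq l (complex_of_real (norm q)) x)"
  unfolding Tq_def by (rule majorant[OF q]) simp

lemma step3:
  fixes q :: complex assumes q: "norm q < 1"
  shows "(Tq 3 q has_sum Vq q) (Pi\<^sub>E {1..3} (\<lambda>_. UNIV))"
proof -
  define c where "c = complex_of_real (norm q)"
  have c: "norm c < 1" unfolding c_def using q by simp
  show ?thesis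
  proof (rule fiber_step[where h="\<lambda>x. (x 1 + x 3, x 2 + x 3)" and B=UNIV and g="Fb q"
        and M="\<lambda>x. Re (Tq 3 c x)" and G="\<lambda>y. Re (Fb c y)"])
    fix y :: "nat \<times> nat"
    obtain a b where y: "y = (a, b)" by (cases y)
    show "finite {x \<in> Pi\<^sub>E {1..3::nat} (\<lambda>_. UNIV::nat set). (x 1 + x 3, x 2 + x 3) = y}"
      unfolding y fiber3 by simp
    show "(\<Sum>x\<in>{x \<in> Pi\<^sub>E {1..3::nat} (\<lambda>_. UNIV::nat set). (x 1 + x 3, x 2 + x 3) = y}. Tq 3 q x) = Fb q y"
      unfolding y by (rule fiber3_sum[OF q])
    have "(\<Sum>x\<in>{x \<in> Pi\<^sub>E {1..3::nat} (\<lambda>_. UNIV::nat set). (x 1 + x 3, x 2 + x 3) = y}. Re (Tq 3 c x))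
        = Re (\<Sum>x\<in>{x \<in> Pi\<^sub>E {1..3::nat} (\<lambda>_. UNIV::nat set). (x 1 + x 3, x 2 + x 3) = y}. Tq 3 c x)"
      by (simp only: Re_sum)
    also have "\<dots> = Re (Fb c y)" unfolding y by (simp only: fiber3_sum[OF c])
    finally show "(\<Sum>x\<in>{x \<in> Pi\<^sub>E {1..3::nat} (\<lambda>_. UNIV::nat set). (x 1 + x 3, x 2 + x 3) = y}. Re (Tq 3 c x)) = Re (Fb c y)" .
  next
    show "(\<lambda>y. Re (Fb c y)) summable_on UNIV"
      by (rule summable_on_Re) (use Fb_has_sum[OF c] in \<open>auto simp: summable_on_def\<close>)
  next
    fix x show "norm (Tq 3 q x) \<le> Re (Tq 3 c x)" unfolding c_def by (rule Tq_majorant[OF q])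
  next
    show "(Fb q has_sum Vq q) UNIV" by (rule Fb_has_sum[OF q])
  qed simp
qed

definition xg :: "(nat \<Rightarrow> nat) \<Rightarrow> nat \<Rightarrow> nat \<Rightarrow> nat \<Rightarrow> nat" where
  "xg y l k = y(1 := y 1 - k, 2 := y 2 - k, Suc l := k)"

definition hg :: "nat \<Rightarrow> (nat \<Rightarrow> nat) \<Rightarrow> nat \<Rightarrow> nat" where
  "hg l x = (\<lambda>i. if i \<in> {1..l} then (if i = 1 then x 1 + x (Suc l) else if i = 2 then x 2 + x (Suc l) else x i) else undefined)"

lemma fiberg:
  assumes l: "3 \<le> l" and y: "y \<in> Pi\<^sub>E {1..l} (\<lambda>_. UNIV::nat set)"
  shows "{x \<in> Pi\<^sub>E {1..Suc l} (\<lambda>_. UNIV::nat set). hg l x = y} = xg y l ` {..min (y 1) (y 2)}"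
proof (intro equalityI subsetI)
  fix x :: "nat \<Rightarrow> nat" assume x: "x \<in> {x \<in> Pi\<^sub>E {1..Suc l} (\<lambda>_. UNIV::nat set). hg l x = y}"
  hence xP: "x \<in> Pi\<^sub>E {1..Suc l} (\<lambda>_. UNIV::nat set)" and e: "hg l x = y" by auto
  have ei: "hg l x i = y i" for i using e by simp
  have y1: "y 1 = x 1 + x (Suc l)" using ei[of 1] l unfolding hg_def by simp
  have y2: "y 2 = x 2 + x (Suc l)" using ei[of 2] l unfolding hg_def by simp
  have yi: "y i = x i" if "3 \<le> i" "i \<le> l" for i using ei[of i] that unfolding hg_def by simp
  have "x = xg y l (x (Suc l))"
  proof (rule ext)
    fix i
    show "x i = xg y l (x (Suc l)) i"
    proof (cases "i \<in> {1..Suc l}")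
      case True
      hence "i = 1 \<or> i = 2 \<or> i = Suc l \<or> (3 \<le> i \<and> i \<le> l)" by auto
      thus ?thesis
      proof (elim disjE)
        assume "i = 1" thus ?thesis unfolding xg_def using y1 l by simp
      next
        assume "i = 2" thus ?thesis unfolding xg_def using y2 l by simp
      next
        assume "i = Suc l" thus ?thesis unfolding xg_def by simp
      next
        assume i: "3 \<le> i \<and> i \<le> l"
        thus ?thesis unfolding xg_def using yi[of i] by simp
      qed
    next
      case False
      hence "x i = undefined" by (rule PiE_arb[OF xP])
      moreover have "i \<notin> {1..l}" using False by auto
      hence "y i = undefined" by (rule PiE_arb[OF y])
      moreover have "i \<noteq> 1" "i \<noteq> 2" "i \<noteq> Suc l" using False l by auto
      ultimately show ?thesis unfolding xg_def by simp
    qed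
  qed
  moreover have "x (Suc l) \<in> {..min (y 1) (y 2)}" using y1 y2 by auto
  ultimately show "x \<in> xg y l ` {..min (y 1) (y 2)}" by (rule image_eqI)
next
  fix x assume "x \<in> xg y l ` {..min (y 1) (y 2)}"
  then obtain k where k: "k \<le> min (y 1) (y 2)" and x: "x = xg y l k" by auto
  have "x \<in> extensional {1..Suc l}"
  unfolding extensional_def proof (rule CollectI, intro allI impI)
    fix i assume i: "i \<notin> {1..Suc l}"
    hence "i \<notin> {1..l}" by auto
    hence "y i = undefined" by (rule PiE_arb[OF y])
    moreover have "i \<noteq> 1" "i \<noteq> 2" "i \<noteq> Suc l" using i l by auto
    ultimately show "x i = undefined" unfolding x xg_def by simp
  qed
  hence "x \<in> Pi\<^sub>E {1..Suc l} (\<lambda>_. UNIV::nat set)" by (simp add: PiE_iff)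
  moreover have "hg l x = y"
  proof (rule ext)
    fix i
    show "hg l x i = y i"
    proof (cases "i \<in> {1..l}")
      case True
      hence "i = 1 \<or> i = 2 \<or> (3 \<le> i \<and> i \<le> l)" by auto
      thus ?thesis
      proof (elim disjE)
        assume "i = 1" thus ?thesis unfolding hg_def x xg_def using k l by simp
      next
        assume "i = 2" thus ?thesis unfolding hg_def x xg_def using k l by simp
      next
        assume i: "3 \<le> i \<and> i \<le> l"
        thus ?thesis unfolding hg_def x xg_def by simp
      qed
    next
      case False
      hence "y i = undefined" by (rule PiE_arb[OF y])
      thus ?thesis unfolding hg_def using False by (simp del: atLeastAtMost_iff)
    qed
  qed
  ultimately show "x \<in> {x \<in> Pi\<^sub>E {1..Suc l} (\<lambda>_. UNIV::nat set). hg l x = y}" by simp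
qed

lemma inj_xg: "inj_on (xg y l) K"
proof (rule inj_onI)
  fix k k' assume "xg y l k = xg y l k'"
  hence "xg y l k (Suc l) = xg y l k' (Suc l)" by simp
  thus "k = k'" unfolding xg_def by simp
qed

lemma prod_split12:
  fixes f :: "nat \<Rightarrow> complex" assumes "2 \<le> l"
  shows "(\<Prod>i\<in>{1..l}. f i) = f 1 * f 2 * (\<Prod>i\<in>{3..l}. f i)"
proof -
  have "{1..l} = insert 1 (insert 2 {3..l})" using assms by auto
  thus ?thesis by (simp add: mult.assoc)
qed

lemma fiberg_sum:
  fixes q :: complex assumes q: "norm q < 1" and l: "3 \<le> l" and y: "y \<in> Pi\<^sub>E {1..l} (\<lambda>_. UNIV::nat set)"
  shows "(\<Sum>x\<in>{x \<in> Pi\<^sub>E {1..Suc l} (\<lambda>_. UNIV::nat set). hg l x = y}. Tq (Suc l) q x) = Tq l q y"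
proof -
  have nz: "\<And>k. qpoch q q k \<noteq> 0" by (rule qpoch_nonzero[OF q])
  define W where "W = (\<Prod>i\<in>{3..l}. qpoch q q (y i))"
  define E where "E = nat (Qform l y)"
  have "(\<Sum>x\<in>{x \<in> Pi\<^sub>E {1..Suc l} (\<lambda>_. UNIV::nat set). hg l x = y}. Tq (Suc l) q x)
        = (\<Sum>k\<le>min (y 1) (y 2). Tq (Suc l) q (xg y l k))"
    unfolding fiberg[OF l y] by (rule sum.reindex[OF inj_xg, unfolded o_def])
  also have "\<dots> = (\<Sum>k\<le>min (y 1) (y 2). q ^ E / W *
        (q ^ ((y 1 - k) * (y 2 - k)) / (qpoch q q (y 1 - k) * qpoch q q (y 2 - k) * qpoch q q k)))"
  proof (intro sum.cong refl)
    fix k assume k: "k \<in> {..min (y 1) (y 2)}"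
    have x1: "xg y l k 1 = y 1 - k" "xg y l k 2 = y 2 - k" "xg y l k (Suc l) = k"
      unfolding xg_def using l by auto
    have xi: "xg y l k i = y i" if "i \<in> {3..l}" for i unfolding xg_def using that by auto
    have Qs: "Qform (Suc l) (xg y l k) = Qform l y + int ((y 1 - k) * (y 2 - k))"
      unfolding xg_def by (rule Qform_step[OF l]) (use k in auto)
    have nQ: "nat (Qform (Suc l) (xg y l k)) = E + (y 1 - k) * (y 2 - k)"
      unfolding Qs E_def using Qform_nonneg[of l y] by (simp add: nat_add_distrib nat_mult_distrib)
    have "(\<Prod>i\<in>{1..Suc l}. qpoch q q (xg y l k i))
        = qpoch q q (y 1 - k) * qpoch q q (y 2 - k) * (W * qpoch q q k)"
    proof -
      have "(\<Prod>i\<in>{1..Suc l}. qpoch q q (xg y l k i))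
          = qpoch q q (xg y l k 1) * qpoch q q (xg y l k 2) * (\<Prod>i\<in>{3..Suc l}. qpoch q q (xg y l k i))"
        by (rule prod_split12) (use l in auto)
      also have "(\<Prod>i\<in>{3..Suc l}. qpoch q q (xg y l k i))
          = (\<Prod>i\<in>{3..l}. qpoch q q (xg y l k i)) * qpoch q q (xg y l k (Suc l))"
        using l by (simp add: prod.cl_ivl_Suc)
      also have "(\<Prod>i\<in>{3..l}. qpoch q q (xg y l k i)) = W"
        unfolding W_def by (intro prod.cong refl) (simp add: xi)
      finally show ?thesis unfolding x1 .
    qed
    thus "Tq (Suc l) q (xg y l k) = q ^ E / W *
        (q ^ ((y 1 - k) * (y 2 - k)) / (qpoch q q (y 1 - k) * qpoch q q (y 2 - k) * qpoch q q k))"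
      unfolding Tq_def nQ by (simp add: power_add mult_ac)
  qed
  also have "\<dots> = q ^ E / W * (1 / (qpoch q q (y 1) * qpoch q q (y 2)))"
    unfolding sum_distrib_left[symmetric] key_sym[OF nz] ..
  also have "\<dots> = Tq l q y"
  proof -
    have "(\<Prod>i\<in>{1..l}. qpoch q q (y i)) = qpoch q q (y 1) * qpoch q q (y 2) * W"
      unfolding W_def by (rule prod_split12) (use l in auto)
    thus ?thesis unfolding Tq_def E_def[symmetric] by (simp add: mult_ac)
  qed
  finally show ?thesis .
qed

lemma general_step:
  fixes q :: complex
  assumes l: "3 \<le> l"
    and IH: "\<And>q. norm q < 1 \<Longrightarrow> (Tq l q has_sum Vq q) (Pi\<^sub>E {1..l} (\<lambda>_. UNIV))"
    and q: "norm q < 1"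
  shows "(Tq (Suc l) q has_sum Vq q) (Pi\<^sub>E {1..Suc l} (\<lambda>_. UNIV))"
proof -
  define c where "c = complex_of_real (norm q)"
  have c: "norm c < 1" unfolding c_def using q by simp
  show ?thesis
  proof (rule fiber_step[where h="hg l" and B="Pi\<^sub>E {1..l} (\<lambda>_. UNIV)" and g="Tq l q"
        and M="\<lambda>x. Re (Tq (Suc l) c x)" and G="\<lambda>y. Re (Tq l c y)"])
    fix x :: "nat \<Rightarrow> nat" assume "x \<in> Pi\<^sub>E {1..Suc l} (\<lambda>_. UNIV)"
    show "hg l x \<in> Pi\<^sub>E {1..l} (\<lambda>_. UNIV)"
      unfolding PiE_iff extensional_def hg_def by (auto simp del: atLeastAtMost_iff)
  next
    fix y :: "nat \<Rightarrow> nat" assume y: "y \<in> Pi\<^sub>E {1..l} (\<lambda>_. UNIV)"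
    show "finite {x \<in> Pi\<^sub>E {1..Suc l} (\<lambda>_. UNIV::nat set). hg l x = y}"
      unfolding fiberg[OF l y] by simp
    show "(\<Sum>x\<in>{x \<in> Pi\<^sub>E {1..Suc l} (\<lambda>_. UNIV::nat set). hg l x = y}. Tq (Suc l) q x) = Tq l q y"
      by (rule fiberg_sum[OF q l y])
    have "(\<Sum>x\<in>{x \<in> Pi\<^sub>E {1..Suc l} (\<lambda>_. UNIV::nat set). hg l x = y}. Re (Tq (Suc l) c x))
        = Re (\<Sum>x\<in>{x \<in> Pi\<^sub>E {1..Suc l} (\<lambda>_. UNIV::nat set). hg l x = y}. Tq (Suc l) c x)"
      by (simp only: Re_sum)
    also have "\<dots> = Re (Tq l c y)" by (simp only: fiberg_sum[OF c l y])
    finally show "(\<Sum>x\<in>{x \<in> Pi\<^sub>E {1..Suc l} (\<lambda>_. UNIV::nat set). hg l x = y}. Re (Tq (Suc l) c x)) = Re (Tq l c y)" .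
  next
    show "(\<lambda>y. Re (Tq l c y)) summable_on Pi\<^sub>E {1..l} (\<lambda>_. UNIV)"
      by (rule summable_on_Re) (use IH[OF c] in \<open>auto simp: summable_on_def\<close>)
  next
    fix x show "norm (Tq (Suc l) q x) \<le> Re (Tq (Suc l) c x)" unfolding c_def by (rule Tq_majorant[OF q])
  next
    show "(Tq l q has_sum Vq q) (Pi\<^sub>E {1..l} (\<lambda>_. UNIV))" by (rule IH[OF q])
  qed
qed

lemma all_l:
  fixes q :: complex
  assumes l: "3 \<le> l" and q: "norm q < 1"
  shows "(Tq l q has_sum Vq q) (Pi\<^sub>E {1..l} (\<lambda>_. UNIV))"
  using l q
proof (induction l arbitrary: q rule: dec_induct)
  case base
  then show ?case by (rule step3)
next
  case (step l)
  show ?case by (rule general_step[OF step.hyps(1) step.IH step.prems])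
qed

lemma rhs_eq:
  fixes q :: complex assumes q: "norm q < 1"
  shows "qpoch_inf (-q) (q^2) * qpoch_inf (-q) (q^2) * qpoch_inf (q^2) (q^2) / qpoch_inf q q = Vq q"
  unfolding Vq_def using jtp(1)[OF q] by (simp add: power2_eq_square)

definition phi3 :: "nat \<times> nat \<times> nat \<Rightarrow> nat \<Rightarrow> nat" where
  "phi3 = (\<lambda>(i, j, k). (\<lambda>t. if t = 1 then i else if t = 2 then j else if t = 3 then k else undefined))"

lemma bij_phi3: "bij_betw phi3 UNIV (Pi\<^sub>E {1..3} (\<lambda>_. UNIV::nat set))"
proof (rule bij_betwI[where g="\<lambda>x. (x 1, x 2, x 3)"])
  show "phi3 \<in> UNIV \<rightarrow> Pi\<^sub>E {1..3} (\<lambda>_. UNIV::nat set)"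
  proof
    fix t :: "nat \<times> nat \<times> nat"
    obtain i j k where t: "t = (i, j, k)" by (cases t) auto
    have "phi3 t \<in> extensional {1..3}"
      unfolding extensional_def t phi3_def by auto
    thus "phi3 t \<in> Pi\<^sub>E {1..3} (\<lambda>_. UNIV::nat set)" by (simp add: PiE_iff)
  qed
  show "(\<lambda>x. (x 1, x 2, x 3)) \<in> Pi\<^sub>E {1..3} (\<lambda>_. UNIV::nat set) \<rightarrow> UNIV" by simp
  fix t :: "nat \<times> nat \<times> nat"
  obtain i j k where t: "t = (i, j, k)" by (cases t) auto
  show "(\<lambda>x. (x 1, x 2, x 3)) (phi3 t) = t" unfolding t phi3_def by simp
next
  fix x :: "nat \<Rightarrow> nat" assume x: "x \<in> Pi\<^sub>E {1..3} (\<lambda>_. UNIV::nat set)"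
  show "phi3 ((\<lambda>x. (x 1, x 2, x 3)) x) = x"
  proof (rule ext)
    fix t
    show "phi3 ((\<lambda>x. (x 1, x 2, x 3)) x) t = x t"
    proof (cases "t \<in> {1..3}")
      case True
      hence "1 \<le> t" "t \<le> 3" by auto
      hence "t = 1 \<or> t = 2 \<or> t = 3" by presburger
      thus ?thesis unfolding phi3_def by auto
    next
      case False
      hence "x t = undefined" by (rule PiE_arb[OF x])
      moreover have "t \<noteq> 1" "t \<noteq> 2" "t \<noteq> 3" using False by auto
      ultimately show ?thesis unfolding phi3_def by simp
    qed
  qed
qed

lemma Tq3_phi3:
  "Tq 3 q (phi3 (i, j, k)) = q ^ (i^2 + j^2 + k^2 + i*k + j*k) / (qpoch q q i * qpoch q q j * qpoch q q k)"
proof -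
  have p: "phi3 (i, j, k) 1 = i" "phi3 (i, j, k) 2 = j" "phi3 (i, j, k) 3 = k" unfolding phi3_def by auto
  have le: "(i + k) * (j + k) \<le> (i + k)^2 + (j + k)^2"
    by (metis add.commute le_add2 le_square linear mult_le_mono1 mult_le_mono2 order_trans power2_eq_square)
  have "int ((i + k)^2 + (j + k)^2 - (i + k) * (j + k)) + int (i * j) = int (i^2 + j^2 + k^2 + i*k + j*k)"
    using le by (simp add: of_nat_diff power2_eq_square algebra_simps)
  hence "Qform 3 (phi3 (i, j, k)) = int (i^2 + j^2 + k^2 + i*k + j*k)"
    unfolding Qform_3 p .
  hence "nat (Qform 3 (phi3 (i, j, k))) = i^2 + j^2 + k^2 + i*k + j*k" by (simp only: nat_int)
  thus ?thesis unfolding Tq_def prod_1_3 p by simp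
qed

theorem corollary1p2:
  fixes q :: complex
  assumes "norm q < 1"
  shows "((\<lambda>(i,j). q powi (int i ^ 2 - int i * int j + int j ^ 2) /
             (qpoch q q i * qpoch q q j))
          has_sum (qpoch_inf (-q) (q^2) * qpoch_inf (-q) (q^2) * qpoch_inf (q^2) (q^2)
                   / qpoch_inf q q)) UNIV
    \<and> ((\<lambda>(i,j,k). q ^ (i^2 + j^2 + k^2 + i*k + j*k) /
             (qpoch q q i * qpoch q q j * qpoch q q k))
          has_sum (qpoch_inf (-q) (q^2) * qpoch_inf (-q) (q^2) * qpoch_inf (q^2) (q^2)
                   / qpoch_inf q q)) UNIV
    \<and> (\<forall>l::nat. l \<ge> 4 \<longrightarrow>
          ((\<lambda>n. q powi (Qform l n) / (\<Prod>i\<in>{1..l}. qpoch q q (n i)))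
          has_sum (qpoch_inf (-q) (q^2) * qpoch_inf (-q) (q^2) * qpoch_inf (q^2) (q^2)
                   / qpoch_inf q q)) (Pi\<^sub>E {1..l} (\<lambda>_. UNIV)))"
proof (intro conjI allI impI)
  have q: "norm q < 1" by (rule assms)
  note R = rhs_eq[OF q]
  show "((\<lambda>(i,j). q powi (int i ^ 2 - int i * int j + int j ^ 2) /
             (qpoch q q i * qpoch q q j))
          has_sum (qpoch_inf (-q) (q^2) * qpoch_inf (-q) (q^2) * qpoch_inf (q^2) (q^2)
                   / qpoch_inf q q)) UNIV"
    unfolding R
  proof -
    have "Fb q x = (\<lambda>(i,j). q powi (int i ^ 2 - int i * int j + int j ^ 2) / (qpoch q q i * qpoch q q j)) x" for x
    proof -
      obtain i j where x: "x = (i, j)" by (cases x)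
      have le: "i * j \<le> i^2 + j^2"
        by (metis add.commute le_add2 le_square linear mult_le_mono1 mult_le_mono2 order_trans power2_eq_square)
      have e: "int (i^2 + j^2 - i * j) = int i ^ 2 - int i * int j + int j ^ 2"
        using le by (simp add: of_nat_diff)
      have "q powi int (i^2 + j^2 - i * j) = q ^ (i^2 + j^2 - i * j)" by (rule power_int_of_nat)
      thus ?thesis unfolding x Fb_def e by simp
    qed
    hence "Fb q = (\<lambda>(i,j). q powi (int i ^ 2 - int i * int j + int j ^ 2) / (qpoch q q i * qpoch q q j))"
      by (rule ext)
    thus "((\<lambda>(i,j). q powi (int i ^ 2 - int i * int j + int j ^ 2) / (qpoch q q i * qpoch q q j))
          has_sum Vq q) UNIV" using Fb_has_sum[OF q] by simp
  qed
  show "((\<lambda>(i,j,k). q ^ (i^2 + j^2 + k^2 + i*k + j*k) /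
             (qpoch q q i * qpoch q q j * qpoch q q k))
          has_sum (qpoch_inf (-q) (q^2) * qpoch_inf (-q) (q^2) * qpoch_inf (q^2) (q^2)
                   / qpoch_inf q q)) UNIV"
    unfolding R
  proof -
    have "((\<lambda>x. Tq 3 q (phi3 x)) has_sum Vq q) UNIV"
      using has_sum_reindex_bij_betw[OF bij_phi3, of "Tq 3 q" "Vq q"] step3[OF q] by simp
    moreover have "(\<lambda>x. Tq 3 q (phi3 x)) = (\<lambda>(i,j,k). q ^ (i^2 + j^2 + k^2 + i*k + j*k) /
             (qpoch q q i * qpoch q q j * qpoch q q k))"
      by (rule ext) (auto simp: Tq3_phi3 split: prod.splits)
    ultimately show "((\<lambda>(i,j,k). q ^ (i^2 + j^2 + k^2 + i*k + j*k) /
             (qpoch q q i * qpoch q q j * qpoch q q k)) has_sum Vq q) UNIV" by simp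
  qed
  fix l :: nat assume l: "4 \<le> l"
  have "(\<lambda>n. q powi (Qform l n) / (\<Prod>i\<in>{1..l}. qpoch q q (n i))) = Tq l q"
    unfolding Tq_def powi_Qform ..
  thus "((\<lambda>n. q powi (Qform l n) / (\<Prod>i\<in>{1..l}. qpoch q q (n i)))
          has_sum (qpoch_inf (-q) (q^2) * qpoch_inf (-q) (q^2) * qpoch_inf (q^2) (q^2)
                   / qpoch_inf q q)) (Pi\<^sub>E {1..l} (\<lambda>_. UNIV))"
    unfolding R using all_l[of l q] l q by simp
qed

end
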